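(* Let $G=(G'_\ell,A'_\ell,B'_\ell)\circ\cdots\circ(G'_1,A'_1,B'_1)\circ G'_0$ be the compact canonical decomposition of a graph $G$. For $S\subseteq V(G)$ let $S_i=S\cap V(G'_i)$. Then $S$ is a fixing set of $G$ if and only if $S_i$ is a fixing set of $G'_i$ for every $i=0,1,\dots,\ell$. Consequently $\mathrm{Fix}(G)=\sum_{i=0}^{\ell}\mathrm{Fix}(G'_i)$.
   Context: All graphs are finite and simple. A set $S\subseteq V(G)$ is a fixing set of $G$ if the only automorphism of $G$ fixing every vertex of $S$ is the identity; $\mathrm{Fix}(G)$ is the minimum size of a fixing set. A graph is split if its vertex set can be partitioned into $A$ (inducing a complete graph) and $B$ (inducing an independent set), either possibly empty; $(A,B)$ is a $KS$-partition. For split $(G,A,B)$ with $V(G)\neq\emptyset$ and a graph $H$, $V(H)\ne\emptyset$, on disjoint vertices, $(G,A,B)\circ H$ is the graph on $V(G)\cup V(H)$ with edge set $E(G)\cup E(H)\cup\{uv:u\in A,v\in V(H)\}$ (associative; iterated compositions read right-nested). A graph is indecomposable if it is not isomorphic to any such composition. Canonical decomposition (Tyshkevich): every graph is $G=(G_k,A_k,B_k)\circ\cdots\circ(G_1,A_1,B_1)\circ G_0$ with every $G_i$ indecomposable, unique up to componentwise isomorphism. A single-vertex component $(G_i,A_i,B_i)$, $i\ge1$, has type $K_1$ if $A_i=V(G_i)$ and type $S_1$ if $B_i=V(G_i)$; if $G_0$ and $G_1$ are both single-vertex graphs, $G_0$ gets the type of $G_1$. The compact canonical decomposition is obtained by replacing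 each maximal run of consecutive single-vertex components of the same type by a single component: $m$ components of type $K_1$ by $K_m$ with $KS$-partition $(V(K_m),\emptyset)$, and $m$ components of type $S_1$ by the edgeless graph on $m$ vertices with $KS$-partition $(\emptyset,\text{all vertices})$ (a run containing $G_0$ yields the new $G'_0$). *)

theory Defs
  imports Main
begin

definition graph :: "'a set \<Rightarrow> 'a set set \<Rightarrow> bool" where
  "graph V E \<longleftrightarrow> finite V \<and>
     (\<forall>e\<in>E. \<exists>u v. u \<in> V \<and> v \<in> V \<and> u \<noteq> v \<and> e = {u, v})"

definition complete_edges :: "'a set \<Rightarrow> 'a set set" where
  "complete_edges V = {e. \<exists>u v. u \<in> V \<and> v \<in> V \<and> u \<noteq> v \<and> e = {u, v}}"

definition induced_edges :: "'a set set \<Rightarrow> 'a set \<Rightarrow> 'a set set" where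
  "induced_edges E X = {e \<in> E. e \<subseteq> X}"

definition automorphism :: "'a set \<Rightarrow> 'a set set \<Rightarrow> ('a \<Rightarrow> 'a) \<Rightarrow> bool" where
  "automorphism V E f \<longleftrightarrow> bij_betw f V V \<and>
     (\<forall>u\<in>V. \<forall>v\<in>V. {u, v} \<in> E \<longleftrightarrow> {f u, f v} \<in> E)"

definition fixing_set :: "'a set \<Rightarrow> 'a set set \<Rightarrow> 'a set \<Rightarrow> bool" where
  "fixing_set V E S \<longleftrightarrow> S \<subseteq> V \<and>
     (\<forall>f. automorphism V E f \<and> (\<forall>s\<in>S. f s = s) \<longrightarrow> (\<forall>v\<in>V. f v = v))"

definition Fix :: "'a set \<Rightarrow> 'a set set \<Rightarrow> nat" where
  "Fix V E = Min (card ` {S. fixing_set V E S})"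

definition KS_partition :: "'a set \<Rightarrow> 'a set set \<Rightarrow> 'a set \<Rightarrow> 'a set \<Rightarrow> bool" where
  "KS_partition V E A B \<longleftrightarrow> A \<union> B = V \<and> A \<inter> B = {} \<and>
     (\<forall>u\<in>A. \<forall>v\<in>A. u \<noteq> v \<longrightarrow> {u, v} \<in> E) \<and>
     (\<forall>u\<in>B. \<forall>v\<in>B. {u, v} \<notin> E)"

text \<open>Indecomposable: (V,E) is not (isomorphic to) a composition (G,A,B) o H,
  i.e. there is no splitting of V into nonempty X (carrying a split graph with
  KS-partition (A,B)) and Y such that the edges between X and Y are exactly
  those between A and Y.\<close>

definition indecomposable :: "'a set \<Rightarrow> 'a set set \<Rightarrow> bool" where
  "indecomposable V E \<longleftrightarrow> \<not> (\<exists>X Y A B. X \<union> Y = V \<and> X \<inter> Y = {} \<and> X \<noteq> {} \<and> Y \<noteq> {} \<and>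
       KS_partition X (induced_edges E X) A B \<and>
       (\<forall>u\<in>X. \<forall>v\<in>Y. {u, v} \<in> E \<longleftrightarrow> u \<in> A))"

text \<open>Canonical decomposition (G_k,A_k,B_k) o ... o (G_1,A_1,B_1) o G_0 of (V,E),
  with components indexed 0..k: G_i = (VV i, EE i), KS-partition (AA i, BB i)
  for 1 \<le> i \<le> k (AA 0, BB 0 are irrelevant).  The composition is right-nested,
  so A_i is joined to all vertices of G_j for every j < i.\<close>

definition canon_decomp ::
  "'a set \<Rightarrow> 'a set set \<Rightarrow> nat \<Rightarrow> (nat \<Rightarrow> 'a set) \<Rightarrow> (nat \<Rightarrow> 'a set set)
     \<Rightarrow> (nat \<Rightarrow> 'a set) \<Rightarrow> (nat \<Rightarrow> 'a set) \<Rightarrow> bool" where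
  "canon_decomp V E k VV EE AA BB \<longleftrightarrow>
     (\<forall>i\<le>k. \<forall>j\<le>k. i \<noteq> j \<longrightarrow> VV i \<inter> VV j = {}) \<and>
     (\<forall>i\<le>k. graph (VV i) (EE i)) \<and>
     (\<forall>i. 1 \<le> i \<and> i \<le> k \<longrightarrow> VV i \<noteq> {} \<and> KS_partition (VV i) (EE i) (AA i) (BB i)) \<and>
     (1 \<le> k \<longrightarrow> VV 0 \<noteq> {}) \<and>
     (\<forall>i\<le>k. indecomposable (VV i) (EE i)) \<and>
     V = (\<Union>i\<le>k. VV i) \<and>
     E = (\<Union>i\<le>k. EE i) \<union>
         {{u, v} | u v. \<exists>i j. j < i \<and> i \<le> k \<and> u \<in> AA i \<and> v \<in> VV j}"

text \<open>Component i is single-vertex iff card (VV i) = 1.  Consecutive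
  components i, i+1 are merged iff both are single-vertex of the same type
  (type K_1: AA i = VV i, type S_1: BB i = VV i); G_0, if single-vertex and
  G_1 is single-vertex, has the type of G_1.  The map g sends an index of the
  canonical decomposition to the index of the component of the compact one
  containing it.\<close>

definition merge_next :: "nat \<Rightarrow> (nat \<Rightarrow> 'a set) \<Rightarrow> (nat \<Rightarrow> 'a set) \<Rightarrow> nat \<Rightarrow> bool" where
  "merge_next k VV AA i \<longleftrightarrow> i < k \<and> card (VV i) = 1 \<and> card (VV (Suc i)) = 1 \<and>
     (i = 0 \<or> (AA i = VV i \<longleftrightarrow> AA (Suc i) = VV (Suc i)))"

definition typeK :: "nat \<Rightarrow> (nat \<Rightarrow> 'a set) \<Rightarrow> (nat \<Rightarrow> 'a set) \<Rightarrow> nat \<Rightarrow> bool" where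
  "typeK k VV AA i \<longleftrightarrow> (if i = 0 then 1 \<le> k \<and> card (VV 1) = 1 \<and> AA 1 = VV 1 else AA i = VV i)"

definition compact_canon_decomp ::
  "'a set \<Rightarrow> 'a set set \<Rightarrow> nat \<Rightarrow> (nat \<Rightarrow> 'a set) \<Rightarrow> (nat \<Rightarrow> 'a set set)
     \<Rightarrow> (nat \<Rightarrow> 'a set) \<Rightarrow> (nat \<Rightarrow> 'a set) \<Rightarrow> bool" where
  "compact_canon_decomp V E l VV' EE' AA' BB' \<longleftrightarrow>
     (\<exists>k VV EE AA BB g. canon_decomp V E k VV EE AA BB \<and>
        g 0 = 0 \<and>
        (\<forall>i<k. g (Suc i) = (if merge_next k VV AA i then g i else Suc (g i))) \<and>
        g k = l \<and>
        (\<forall>j\<le>l. VV' j = (\<Union>i\<in>{i. i \<le> k \<and> g i = j}. VV i)) \<and>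
        (\<forall>i\<le>k. EE' (g i) =
            (if card (VV i) = 1
             then (if typeK k VV AA i then complete_edges (VV' (g i)) else {})
             else EE i)) \<and>
        (\<forall>i. 1 \<le> i \<and> i \<le> k \<longrightarrow> (AA' (g i), BB' (g i)) =
            (if card (VV i) = 1
             then (if AA i = VV i then (VV' (g i), {}) else ({}, VV' (g i)))
             else (AA i, BB i))))"

end

theory Submission
  imports Defs
begin


definition splitmod :: "'a set set \<Rightarrow> 'a set \<Rightarrow> 'a set \<Rightarrow> 'a set \<Rightarrow> bool" where
 "splitmod E W X A \<longleftrightarrow> A \<subseteq> X \<and> X \<subseteq> W \<and> (\<forall>u\<in>A. \<forall>v\<in>A. u \<noteq> v \<longrightarrow> {u,v} \<in> E)
   \<and> (\<forall>u\<in>X-A. \<forall>v\<in>X-A. {u,v} \<notin> E) \<and> (\<forall>u\<in>X. \<forall>v\<in>W-X. {u,v} \<in> E \<longleftrightarrow> u \<in> A)"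

definition indec_adj :: "'a set set \<Rightarrow> 'a set \<Rightarrow> bool" where
 "indec_adj E H \<longleftrightarrow> \<not>(\<exists>X A. X \<noteq> {} \<and> X \<noteq> H \<and> splitmod E H X A)"

lemma splitmodI:
  assumes "A \<subseteq> X" "X \<subseteq> W" "\<And>u v. u\<in>A \<Longrightarrow> v\<in>A \<Longrightarrow> u \<noteq> v \<Longrightarrow> {u,v} \<in> E"
   "\<And>u v. u\<in>X-A \<Longrightarrow> v\<in>X-A \<Longrightarrow> {u,v} \<notin> E" "\<And>u v. u\<in>X \<Longrightarrow> v\<in>W-X \<Longrightarrow> {u,v} \<in> E \<longleftrightarrow> u \<in> A"
  shows "splitmod E W X A"
  using assms unfolding splitmod_def by blast

lemma splitmodD:
  assumes "splitmod E W X A"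
  shows "A \<subseteq> X" "X \<subseteq> W" "\<And>u v. u\<in>A \<Longrightarrow> v\<in>A \<Longrightarrow> u \<noteq> v \<Longrightarrow> {u,v} \<in> E"
   "\<And>u v. u\<in>X-A \<Longrightarrow> v\<in>X-A \<Longrightarrow> {u,v} \<notin> E" "\<And>u v. u\<in>X \<Longrightarrow> v\<in>W-X \<Longrightarrow> {u,v} \<in> E \<longleftrightarrow> u \<in> A"
  using assms unfolding splitmod_def by blast+

lemma indec_adjD: "indec_adj E H \<Longrightarrow> splitmod E H X A \<Longrightarrow> X = {} \<or> X = H"
  unfolding indec_adj_def by blast

lemma edge_sym: "{u,v} \<in> E \<longleftrightarrow> {v,u} \<in> E"
  by (simp add: insert_commute)

lemma card2_ex: "card H \<ge> 2 \<Longrightarrow> \<exists>x. x \<in> H"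
  by (cases "H = {}") auto

lemma card2_other: "finite H \<Longrightarrow> card H \<ge> 2 \<Longrightarrow> \<exists>y\<in>H. y \<noteq> a"
proof (rule ccontr)
  assume "finite H" "card H \<ge> 2" "\<not> (\<exists>y\<in>H. y \<noteq> a)"
  then have "H \<subseteq> {a}" by auto
  then have "card H \<le> 1" using card_mono[OF _ \<open>H \<subseteq> {a}\<close>] by simp
  then show False using \<open>card H \<ge> 2\<close> by simp
qed

lemma NI1:
  assumes "indec_adj E H" "finite H" "card H \<ge> 2" "x \<in> H" "\<And>y. y\<in>H \<Longrightarrow> y \<noteq> x \<Longrightarrow> {x,y} \<in> E"
  shows False
proof -
  obtain y where "y \<in> H" "y \<noteq> x" using card2_other[OF assms(2,3)] by blast
  then have "H \<noteq> {x}" by auto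
  moreover have "splitmod E H {x} {x}"
    by (rule splitmodI) (use assms(4,5) in auto)
  ultimately show False using indec_adjD[OF assms(1)] by blast
qed

lemma NI2:
  assumes "indec_adj E H" "finite H" "card H \<ge> 2" "x \<in> H" "\<And>y. y\<in>H \<Longrightarrow> {x,y} \<notin> E"
  shows False
proof -
  obtain y where "y \<in> H" "y \<noteq> x" using card2_other[OF assms(2,3)] by blast
  then have "H \<noteq> {x}" by auto
  moreover have "splitmod E H {x} {}"
    by (rule splitmodI) (use assms(4,5) assms(5)[of x] in auto)
  ultimately show False using indec_adjD[OF assms(1)] by blast
qed

lemma L_both:
  assumes "indec_adj E H" "finite H" "card H \<ge> 2" "A \<subseteq> H"
    "\<And>u v. u\<in>A \<Longrightarrow> v\<in>A \<Longrightarrow> u \<noteq> v \<Longrightarrow> {u,v} \<in> E" "\<And>u v. u\<in>H-A \<Longrightarrow> v\<in>H-A \<Longrightarrow> {u,v} \<notin> E"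
  shows "\<exists>h1 h2. h1 \<in> A \<and> h2 \<in> H - A"
proof -
  obtain x where x: "x \<in> H" using card2_ex[OF assms(3)] by blast
  have "A \<noteq> {}"
  proof
    assume "A = {}"
    then show False using NI2[OF assms(1-3) x] assms(6) x by auto
  qed
  moreover have "A \<noteq> H"
  proof
    assume "A = H"
    then show False using NI1[OF assms(1-3) x] assms(5) x by auto
  qed
  ultimately show ?thesis using assms(4) by blast
qed

lemma splitmod_inter:
  assumes "indec_adj E H" "H \<subseteq> W" "splitmod E W X A"
  shows "X \<inter> H = {} \<or> H \<subseteq> X"
proof (rule ccontr)
  assume c: "\<not> (X \<inter> H = {} \<or> H \<subseteq> X)"
  note d = splitmodD[OF assms(3)]
  have "splitmod E H (X \<inter> H) (A \<inter> H)"
  proof (rule splitmodI)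
    show "A \<inter> H \<subseteq> X \<inter> H" using d(1) by blast
    show "X \<inter> H \<subseteq> H" by blast
    show "\<And>u v. u\<in>A \<inter> H \<Longrightarrow> v\<in>A \<inter> H \<Longrightarrow> u \<noteq> v \<Longrightarrow> {u,v} \<in> E" using d(3) by blast
    show "\<And>u v. u\<in>X \<inter> H-A \<inter> H \<Longrightarrow> v\<in>X \<inter> H-A \<inter> H \<Longrightarrow> {u,v} \<notin> E" using d(4) by blast
    fix u v assume "u \<in> X \<inter> H" "v \<in> H - X \<inter> H"
    then have "u \<in> X" "v \<in> W - X" "u \<in> H" using assms(2) by auto
    then show "{u,v} \<in> E \<longleftrightarrow> u \<in> A \<inter> H" using d(5) by blast
  qed
  moreover have "X \<inter> H \<noteq> {}" "X \<inter> H \<noteq> H" using c by auto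
  ultimately show False using indec_adjD[OF assms(1)] by blast
qed

definition pres :: "'a set set \<Rightarrow> 'a set \<Rightarrow> ('a \<Rightarrow> 'a) \<Rightarrow> bool" where
 "pres E W f \<longleftrightarrow> bij_betw f W W \<and> (\<forall>u\<in>W. \<forall>v\<in>W. {u,v} \<in> E \<longleftrightarrow> {f u, f v} \<in> E)"

lemma presD:
  assumes "pres E W f"
  shows "inj_on f W" "f ` W = W" "\<And>u v. u\<in>W \<Longrightarrow> v\<in>W \<Longrightarrow> {f u, f v} \<in> E \<longleftrightarrow> {u,v} \<in> E"
    "\<And>x. x \<in> W \<Longrightarrow> f x \<in> W" "\<And>y. y \<in> W \<Longrightarrow> \<exists>x\<in>W. y = f x"
  using assms unfolding pres_def bij_betw_def by auto

lemma splitmod_image: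
  assumes "pres E W f" "splitmod E W X A"
  shows "splitmod E W (f ` X) (f ` A)"
proof -
  note p = presD[OF assms(1)]
  note d = splitmodD[OF assms(2)]
  have d2: "f ` X - f ` A = f ` (X - A)"
    using inj_on_image_set_diff[OF p(1), of X A] d(1,2) by blast
  show ?thesis
  proof (rule splitmodI)
    show "f ` A \<subseteq> f ` X" using d(1) by blast
    show "f ` X \<subseteq> W" using d(2) p(4) by blast
    show "{u,v} \<in> E" if uv: "u \<in> f ` A" "v \<in> f ` A" "u \<noteq> v" for u v
    proof -
      obtain a b where ab: "a \<in> A" "b \<in> A" "u = f a" "v = f b" using uv by blast
      then have "a \<noteq> b" using uv by blast
      then have "{a,b} \<in> E" using d(3) ab by blast
      moreover have "a \<in> W" "b \<in> W" using ab d(1,2) by blast+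
      ultimately show ?thesis using p(3)[of a b] ab by simp
    qed
    show "{u,v} \<notin> E" if uv: "u \<in> f ` X - f ` A" "v \<in> f ` X - f ` A" for u v
    proof -
      obtain a b where ab: "a \<in> X - A" "b \<in> X - A" "u = f a" "v = f b" using uv unfolding d2 by blast
      then have "{a,b} \<notin> E" using d(4) by blast
      moreover have "a \<in> W" "b \<in> W" using ab d(1,2) by blast+
      ultimately show ?thesis using p(3)[of a b] ab by simp
    qed
    show "({u,v} \<in> E) = (u \<in> f ` A)" if uv: "u \<in> f ` X" "v \<in> W - f ` X" for u v
    proof -
      obtain a where a: "a \<in> X" "u = f a" using uv(1) by blast
      have vW: "v \<in> W" using uv(2) by simp
      obtain b where b: "b \<in> W" "v = f b" using p(5)[OF vW] by blast
      have bX: "b \<notin> X"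
      proof
        assume "b \<in> X"
        then have "v \<in> f ` X" using b(2) by simp
        then show False using uv(2) by simp
      qed
      have aW: "a \<in> W" using a d(2) by blast
      have AW: "A \<subseteq> W" using d(1,2) by (rule subset_trans)
      have "({u,v} \<in> E) = ({a,b} \<in> E)" using p(3)[OF aW b(1)] a b by simp
      also have "\<dots> = (a \<in> A)" using d(5)[of a b] a(1) b(1) bX by simp
      also have "\<dots> = (u \<in> f ` A)" using inj_on_image_mem_iff[OF p(1) aW AW] a(2) by simp
      finally show ?thesis .
    qed
  qed
qed

lemma L_A:
  assumes "pres E W f" "finite W" "H \<subseteq> W" "indec_adj E H" "card H \<ge> 2" "splitmod E W H A"
  shows "f ` H = H"
proof -
  note p = presD[OF assms(1)]
  have fH: "finite H" using assms(2,3) finite_subset by blast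
  have cardf: "card (f ` H) = card H" using card_image[OF inj_on_subset[OF p(1) assms(3)]] .
  have sm: "splitmod E W (f ` H) (f ` A)" using splitmod_image assms(1,6) by blast
  note d = splitmodD[OF assms(6)]
  note df = splitmodD[OF sm]
  have "f ` H \<inter> H = {} \<or> H \<subseteq> f ` H" using splitmod_inter[OF assms(4,3) sm] .
  then show ?thesis
  proof
    assume "H \<subseteq> f ` H"
    moreover have "finite (f ` H)" using fH by blast
    ultimately have "H = f ` H" using cardf card_subset_eq by metis
    then show ?thesis by simp
  next
    assume dis: "f ` H \<inter> H = {}"
    have "d4": "\<And>u v. u\<in>H-A \<Longrightarrow> v\<in>H-A \<Longrightarrow> {u,v} \<notin> E" using d(4) by blast
    obtain h1 h2 where h: "h1 \<in> A" "h2 \<in> H - A" using L_both[OF assms(4) fH assms(5) d(1) d(3) d4] by blast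
    obtain y where y: "y \<in> H" using card2_ex[OF assms(5)] by blast
    define x where "x = f y"
    have x: "x \<in> f ` H" using y x_def by blast
    have xW: "x \<in> W - H" using x dis df(2) by blast
    have h1W: "h1 \<in> W - f ` H" "h2 \<in> W - f ` H" using h d(1) assms(3) dis by blast+
    have "{h1,x} \<in> E" using d(5)[of h1 x] h d(1) xW by blast
    moreover have "{h2,x} \<notin> E" using d(5)[of h2 x] h xW by blast
    moreover have "{x,h1} \<in> E \<longleftrightarrow> {x,h2} \<in> E" using df(5)[OF x h1W(1)] df(5)[OF x h1W(2)] by blast
    ultimately show ?thesis by (simp add: insert_commute)
  qed
qed

lemma inv_image_set:
  assumes "\<And>x. x \<in> W \<Longrightarrow> f x \<in> W" "\<And>y. y \<in> W \<Longrightarrow> \<exists>x\<in>W. y = f x" "\<And>x. x \<in> W \<Longrightarrow> P (f x) \<longleftrightarrow> P x"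
  shows "f ` {x\<in>W. P x} = {x\<in>W. P x}"
proof
  show "f ` {x\<in>W. P x} \<subseteq> {x\<in>W. P x}"
  proof
    fix y assume "y \<in> f ` {x\<in>W. P x}"
    then obtain x where x: "x \<in> W" "P x" "y = f x" by blast
    then show "y \<in> {x\<in>W. P x}" using assms(1)[OF x(1)] assms(3)[OF x(1)] by simp
  qed
  show "{x\<in>W. P x} \<subseteq> f ` {x\<in>W. P x}"
  proof
    fix y assume y: "y \<in> {x\<in>W. P x}"
    then have yW: "y \<in> W" by simp
    obtain x where x: "x \<in> W" "y = f x" using assms(2)[OF yW] by blast
    then have "P x" using assms(3)[OF x(1)] y by simp
    then show "y \<in> f ` {x\<in>W. P x}" using x by blast
  qed
qed

lemma L_P1:
  assumes "pres E W f"
  shows "f ` {x\<in>W. \<forall>y\<in>W. y \<noteq> x \<longrightarrow> {x,y} \<in> E} = {x\<in>W. \<forall>y\<in>W. y \<noteq> x \<longrightarrow> {x,y} \<in> E}"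
proof (rule inv_image_set)
  note p = presD[OF assms(1)]
  show "\<And>x. x \<in> W \<Longrightarrow> f x \<in> W" "\<And>y. y \<in> W \<Longrightarrow> \<exists>x\<in>W. y = f x" using p(4,5) by auto
  fix x assume x: "x \<in> W"
  show "(\<forall>y\<in>W. y \<noteq> f x \<longrightarrow> {f x, y} \<in> E) = (\<forall>y\<in>W. y \<noteq> x \<longrightarrow> {x, y} \<in> E)"
  proof
    assume a: "\<forall>y\<in>W. y \<noteq> f x \<longrightarrow> {f x, y} \<in> E"
    show "\<forall>y\<in>W. y \<noteq> x \<longrightarrow> {x, y} \<in> E"
    proof (intro ballI impI)
      fix y assume y: "y \<in> W" "y \<noteq> x"
      then have "f y \<noteq> f x" using p(1) x by (metis inj_onD)
      moreover have "f y \<in> W" using y p(4) by blast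
      ultimately have "{f x, f y} \<in> E" using a by blast
      then show "{x,y} \<in> E" using p(3) x y by blast
    qed
  next
    assume a: "\<forall>y\<in>W. y \<noteq> x \<longrightarrow> {x, y} \<in> E"
    show "\<forall>y\<in>W. y \<noteq> f x \<longrightarrow> {f x, y} \<in> E"
    proof (intro ballI impI)
      fix y assume y: "y \<in> W" "y \<noteq> f x"
      obtain z where z: "z \<in> W" "y = f z" using y p(5) by blast
      then have "z \<noteq> x" using y by blast
      then have "{x,z} \<in> E" using a z by blast
      then show "{f x,y} \<in> E" using p(3) x z by blast
    qed
  qed
qed

lemma L_P2:
  assumes "pres E W f"
  shows "f ` {x\<in>W. \<forall>y\<in>W. {x,y} \<notin> E} = {x\<in>W. \<forall>y\<in>W. {x,y} \<notin> E}"
proof (rule inv_image_set)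
  note p = presD[OF assms(1)]
  show "\<And>x. x \<in> W \<Longrightarrow> f x \<in> W" "\<And>y. y \<in> W \<Longrightarrow> \<exists>x\<in>W. y = f x" using p(4,5) by auto
  fix x assume x: "x \<in> W"
  show "(\<forall>y\<in>W. {f x, y} \<notin> E) = (\<forall>y\<in>W. {x, y} \<notin> E)"
  proof
    assume a: "\<forall>y\<in>W. {f x, y} \<notin> E"
    show "\<forall>y\<in>W. {x, y} \<notin> E"
    proof
      fix y assume y: "y \<in> W"
      then have "f y \<in> W" using p(4) by blast
      then have "{f x, f y} \<notin> E" using a by blast
      then show "{x,y} \<notin> E" using p(3) x y by blast
    qed
  next
    assume a: "\<forall>y\<in>W. {x, y} \<notin> E"
    show "\<forall>y\<in>W. {f x, y} \<notin> E"
    proof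
      fix y assume y: "y \<in> W"
      obtain z where z: "z \<in> W" "y = f z" using y p(5) by blast
      then have "{x,z} \<notin> E" using a by blast
      then show "{f x,y} \<notin> E" using p(3) x z by blast
    qed
  qed
qed

lemma uniq1:
  assumes "indec_adj E H" "\<And>u. {u} \<notin> E" "\<exists>y\<in>H. y \<noteq> a"
    "A \<subseteq> H" "\<And>u v. u\<in>A \<Longrightarrow> v\<in>A \<Longrightarrow> u \<noteq> v \<Longrightarrow> {u,v} \<in> E" "\<And>u v. u\<in>H-A \<Longrightarrow> v\<in>H-A \<Longrightarrow> {u,v} \<notin> E"
    "A2 \<subseteq> H" "\<And>u v. u\<in>A2 \<Longrightarrow> v\<in>A2 \<Longrightarrow> u \<noteq> v \<Longrightarrow> {u,v} \<in> E" "\<And>u v. u\<in>H-A2 \<Longrightarrow> v\<in>H-A2 \<Longrightarrow> {u,v} \<notin> E"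
    "a \<in> A" "a \<notin> A2"
  shows False
proof (cases "\<forall>u\<in>H-A. u \<noteq> a \<longrightarrow> {u,a} \<notin> E")
  case True
  have "splitmod E H (H - {a}) (A - {a})"
  proof (rule splitmodI)
    show "A - {a} \<subseteq> H - {a}" using assms(4) by blast
    show "H - {a} \<subseteq> H" by blast
    show "\<And>u v. u\<in>A - {a} \<Longrightarrow> v\<in>A - {a} \<Longrightarrow> u \<noteq> v \<Longrightarrow> {u,v} \<in> E" using assms(5) by blast
    show "\<And>u v. u\<in>H - {a} - (A - {a}) \<Longrightarrow> v\<in>H - {a} - (A - {a}) \<Longrightarrow> {u,v} \<notin> E" using assms(6) by blast
    fix u v assume u: "u \<in> H - {a}" and v: "v \<in> H - (H - {a})"
    then have va: "v = a" by blast
    show "({u, v} \<in> E) = (u \<in> A - {a})"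
    proof (cases "u \<in> A")
      case True
      then show ?thesis using assms(5)[OF True assms(10)] u va by blast
    next
      case False
      then have "{u,a} \<notin> E" using \<open>\<forall>u\<in>H-A. u \<noteq> a \<longrightarrow> {u,a} \<notin> E\<close> u by blast
      then show ?thesis using False va by blast
    qed
  qed
  moreover have "H - {a} \<noteq> {}" "H - {a} \<noteq> H" using assms(3,4,10) by blast+
  ultimately show False using indec_adjD[OF assms(1)] by blast
next
  case False
  then obtain b where b: "b \<in> H - A" "b \<noteq> a" "{b,a} \<in> E" by blast
  have aH: "a \<in> H" using assms(4,10) by blast
  have bA2: "b \<in> A2"
  proof (rule ccontr)
    assume "b \<notin> A2"
    then have "{b,a} \<notin> E" using assms(9)[of b a] b aH assms(11) by blast
    then show False using b by blast
  qed
  have "splitmod E H (H - {b}) A"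
  proof (rule splitmodI)
    show "A \<subseteq> H - {b}" using assms(4) b by blast
    show "H - {b} \<subseteq> H" by blast
    show "\<And>u v. u\<in>A \<Longrightarrow> v\<in>A \<Longrightarrow> u \<noteq> v \<Longrightarrow> {u,v} \<in> E" using assms(5) by blast
    show "\<And>u v. u\<in>H - {b} - A \<Longrightarrow> v\<in>H - {b} - A \<Longrightarrow> {u,v} \<notin> E" using assms(6) by blast
    fix u v assume u: "u \<in> H - {b}" and v: "v \<in> H - (H - {b})"
    have vb: "v = b" using v by blast
    show "({u, v} \<in> E) = (u \<in> A)"
    proof (cases "u \<in> A")
      case uA: True
      show ?thesis
      proof (cases "u = a")
        case True then show ?thesis using b vb uA by (simp add: insert_commute)
      next
        case False
        have "u \<in> A2"
        proof (rule ccontr)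
          assume "u \<notin> A2"
          then have "{u,a} \<notin> E" using assms(9)[of u a] uA assms(4) aH assms(11) by blast
          moreover have "{u,a} \<in> E" using assms(5)[OF uA assms(10) False] .
          ultimately show False by simp
        qed
        then have "{u,b} \<in> E" using assms(8)[OF _ bA2] u by blast
        then show ?thesis using vb uA by blast
      qed
    next
      case False
      then have "{u,b} \<notin> E" using assms(6)[of u b] u b by blast
      then show ?thesis using False vb by blast
    qed
  qed
  moreover have "H - {b} \<noteq> {}" "H - {b} \<noteq> H" using aH b by blast+
  ultimately show False using indec_adjD[OF assms(1)] by blast
qed

lemma uniq:
  assumes "indec_adj E H" "\<And>u. {u} \<notin> E" "finite H" "card H \<ge> 2"
    "A \<subseteq> H" "\<And>u v. u\<in>A \<Longrightarrow> v\<in>A \<Longrightarrow> u \<noteq> v \<Longrightarrow> {u,v} \<in> E" "\<And>u v. u\<in>H-A \<Longrightarrow> v\<in>H-A \<Longrightarrow> {u,v} \<notin> E"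
    "A2 \<subseteq> H" "\<And>u v. u\<in>A2 \<Longrightarrow> v\<in>A2 \<Longrightarrow> u \<noteq> v \<Longrightarrow> {u,v} \<in> E" "\<And>u v. u\<in>H-A2 \<Longrightarrow> v\<in>H-A2 \<Longrightarrow> {u,v} \<notin> E"
  shows "A = A2"
proof -
  have ex: "\<And>a. \<exists>y\<in>H. y \<noteq> a" using card2_other[OF assms(3,4)] by blast
  have "False" if "a \<in> A" "a \<notin> A2" for a
    by (rule uniq1[of E H a A A2]) (fact assms(1) assms(2) ex assms(5) assms(6) assms(7) assms(8) assms(9) assms(10) that)+
  moreover have "False" if "a \<in> A2" "a \<notin> A" for a
    by (rule uniq1[of E H a A2 A]) (fact assms(1) assms(2) ex assms(5) assms(6) assms(7) assms(8) assms(9) assms(10) that)+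
  ultimately show ?thesis by blast
qed




lemma fix_finite: "finite V \<Longrightarrow> finite (card ` {S. fixing_set V E S})"
proof -
  assume "finite V"
  moreover have "{S. fixing_set V E S} \<subseteq> Pow V" unfolding fixing_set_def by blast
  ultimately have "finite {S. fixing_set V E S}" using finite_subset by blast
  then show ?thesis by simp
qed

lemma fixing_self: "fixing_set V E V"
  unfolding fixing_set_def by blast

lemma Fix_char:
  assumes "finite V" "fixing_set V E S0" "card S0 = n" "\<And>S. fixing_set V E S \<Longrightarrow> n \<le> card S"
  shows "Fix V E = n"
  unfolding Fix_def
proof (rule Min_eqI)
  show "finite (card ` {S. fixing_set V E S})" using fix_finite[OF assms(1)] .
  show "\<And>y. y \<in> card ` {S. fixing_set V E S} \<Longrightarrow> n \<le> y" using assms(4) by blast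
  show "n \<in> card ` {S. fixing_set V E S}" using assms(2,3) by blast
qed

lemma Fix_attained:
  assumes "finite V"
  shows "\<exists>S. fixing_set V E S \<and> card S = Fix V E" "\<And>S. fixing_set V E S \<Longrightarrow> Fix V E \<le> card S"
proof -
  have fin: "finite (card ` {S. fixing_set V E S})" using fix_finite[OF assms(1)] .
  have ne: "card ` {S. fixing_set V E S} \<noteq> {}" using fixing_self[of V E] by blast
  have "Fix V E \<in> card ` {S. fixing_set V E S}" unfolding Fix_def using Min_in[OF fin ne] .
  then show "\<exists>S. fixing_set V E S \<and> card S = Fix V E" by force
  show "\<And>S. fixing_set V E S \<Longrightarrow> Fix V E \<le> card S"
    unfolding Fix_def using Min_le[OF fin] by blast
qed

locale absdec =
  fixes V :: "'a set" and E :: "'a set set" and l :: nat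
    and VV' :: "nat \<Rightarrow> 'a set" and EE' :: "nat \<Rightarrow> 'a set set" and AA' :: "nat \<Rightarrow> 'a set"
  assumes fin: "finite V"
  and C1: "\<And>j j'. j \<le> l \<Longrightarrow> j' \<le> l \<Longrightarrow> j \<noteq> j' \<Longrightarrow> VV' j \<inter> VV' j' = {}"
  and C2: "V = (\<Union>j\<le>l. VV' j)"
  and C3: "\<And>j u v. j \<le> l \<Longrightarrow> u \<in> VV' j \<Longrightarrow> v \<in> VV' j \<Longrightarrow> {u,v} \<in> EE' j \<longleftrightarrow> {u,v} \<in> E"
  and C4: "\<And>j j' u v. j \<le> l \<Longrightarrow> j' < j \<Longrightarrow> u \<in> VV' j \<Longrightarrow> v \<in> VV' j' \<Longrightarrow> {u,v} \<in> E \<longleftrightarrow> u \<in> AA' j"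
  and C5: "\<And>j h u. 1 \<le> j \<Longrightarrow> j \<le> l \<Longrightarrow> automorphism (VV' j) (EE' j) h \<Longrightarrow> u \<in> VV' j \<Longrightarrow> h u \<in> AA' j \<longleftrightarrow> u \<in> AA' j"
  and C6: "\<And>f j. automorphism V E f \<Longrightarrow> j \<le> l \<Longrightarrow> f ` VV' j = VV' j"
begin

lemma sub: "j \<le> l \<Longrightarrow> VV' j \<subseteq> V" using C2 by blast

lemma finj: "j \<le> l \<Longrightarrow> finite (VV' j)" using sub fin finite_subset by blast

lemma memV: "v \<in> V \<Longrightarrow> \<exists>j\<le>l. v \<in> VV' j" using C2 by blast

lemma ext_aut:
  assumes j: "j \<le> l" and h: "automorphism (VV' j) (EE' j) h"
  shows "automorphism V E (\<lambda>x. if x \<in> VV' j then h x else x)"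
proof -
  define f where "f = (\<lambda>x. if x \<in> VV' j then h x else x)"
  have hb: "bij_betw h (VV' j) (VV' j)" and he: "\<And>u v. u \<in> VV' j \<Longrightarrow> v \<in> VV' j \<Longrightarrow> {u,v} \<in> EE' j \<longleftrightarrow> {h u, h v} \<in> EE' j"
    using h unfolding automorphism_def by auto
  have hin: "\<And>u. u \<in> VV' j \<Longrightarrow> h u \<in> VV' j" using hb bij_betwE by blast
  have b1: "bij_betw f (VV' j) (VV' j)" using hb bij_betw_cong[of "VV' j" f h] unfolding f_def by simp
  have b2: "bij_betw f (V - VV' j) (V - VV' j)" using bij_betw_cong[of "V - VV' j" f id] unfolding f_def by simp
  have "bij_betw f (VV' j \<union> (V - VV' j)) (VV' j \<union> (V - VV' j))"
    by (rule bij_betw_combine[OF b1 b2]) blast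
  moreover have "VV' j \<union> (V - VV' j) = V" using sub[OF j] by blast
  ultimately have bij: "bij_betw f V V" by simp
  have cross: "{u,v} \<in> E \<longleftrightarrow> {h u, v} \<in> E" if u: "u \<in> VV' j" and v: "v \<in> V - VV' j" for u v
  proof -
    obtain j' where j': "j' \<le> l" "v \<in> VV' j'" using memV v by blast
    have "j' \<noteq> j" using j' v by blast
    then consider "j' < j" | "j < j'" by linarith
    then show ?thesis
    proof cases
      case 1
      have "{u,v} \<in> E \<longleftrightarrow> u \<in> AA' j" using C4[OF j 1 u j'(2)] .
      also have "\<dots> \<longleftrightarrow> h u \<in> AA' j" using C5[OF _ j h u] 1 by simp
      also have "\<dots> \<longleftrightarrow> {h u, v} \<in> E" using C4[OF j 1 hin[OF u] j'(2)] by simp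
      finally show ?thesis .
    next
      case 2
      have "{u,v} \<in> E \<longleftrightarrow> {v,u} \<in> E" by (rule edge_sym)
      also have "\<dots> \<longleftrightarrow> v \<in> AA' j'" using C4[OF j'(1) 2 j'(2) u] .
      also have "\<dots> \<longleftrightarrow> {v, h u} \<in> E" using C4[OF j'(1) 2 j'(2) hin[OF u]] by simp
      also have "\<dots> \<longleftrightarrow> {h u, v} \<in> E" by (rule edge_sym)
      finally show ?thesis .
    qed
  qed
  have edges: "{u,v} \<in> E \<longleftrightarrow> {f u, f v} \<in> E" if u: "u \<in> V" and v: "v \<in> V" for u v
  proof (cases "u \<in> VV' j")
    case uj: True
    show ?thesis
    proof (cases "v \<in> VV' j")
      case True
      have "{u,v} \<in> E \<longleftrightarrow> {u,v} \<in> EE' j" using C3[OF j uj True] by simp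
      also have "\<dots> \<longleftrightarrow> {h u, h v} \<in> EE' j" using he[OF uj True] .
      also have "\<dots> \<longleftrightarrow> {h u, h v} \<in> E" using C3[OF j hin[OF uj] hin[OF True]] .
      finally show ?thesis unfolding f_def using uj True by simp
    next
      case False
      then show ?thesis using cross[OF uj] v unfolding f_def using uj by simp
    qed
  next
    case uj: False
    show ?thesis
    proof (cases "v \<in> VV' j")
      case True
      have "{u,v} \<in> E \<longleftrightarrow> {v,u} \<in> E" by (rule edge_sym)
      also have "\<dots> \<longleftrightarrow> {h v, u} \<in> E" using cross[OF True] u uj by simp
      also have "\<dots> \<longleftrightarrow> {u, h v} \<in> E" by (rule edge_sym)
      finally show ?thesis unfolding f_def using uj True by simp
    next
      case False
      then show ?thesis unfolding f_def using uj by simp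
    qed
  qed
  show ?thesis unfolding automorphism_def f_def[symmetric] using bij edges by blast
qed

lemma restr_aut:
  assumes f: "automorphism V E f" and j: "j \<le> l"
  shows "automorphism (VV' j) (EE' j) f"
proof -
  have im: "f ` VV' j = VV' j" using C6[OF f j] .
  have "bij_betw f V V" using f unfolding automorphism_def by blast
  then have "inj_on f (VV' j)" using sub[OF j] bij_betw_imp_inj_on inj_on_subset by blast
  then have b: "bij_betw f (VV' j) (VV' j)" using im unfolding bij_betw_def by blast
  have e: "{u,v} \<in> E \<longleftrightarrow> {f u, f v} \<in> E" if "u \<in> VV' j" "v \<in> VV' j" for u v
    using f that sub[OF j] unfolding automorphism_def by blast
  have "{u,v} \<in> EE' j \<longleftrightarrow> {f u, f v} \<in> EE' j" if u: "u \<in> VV' j" and v: "v \<in> VV' j" for u v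
  proof -
    have fu: "f u \<in> VV' j" "f v \<in> VV' j" using im u v by blast+
    show ?thesis using C3[OF j u v] C3[OF j fu] e[OF u v] by simp
  qed
  then show ?thesis unfolding automorphism_def using b by blast
qed

lemma part1:
  assumes "S \<subseteq> V"
  shows "fixing_set V E S \<longleftrightarrow> (\<forall>i\<le>l. fixing_set (VV' i) (EE' i) (S \<inter> VV' i))"
proof
  assume fs: "fixing_set V E S"
  show "\<forall>i\<le>l. fixing_set (VV' i) (EE' i) (S \<inter> VV' i)"
  proof (intro allI impI)
    fix j assume j: "j \<le> l"
    show "fixing_set (VV' j) (EE' j) (S \<inter> VV' j)"
      unfolding fixing_set_def
    proof (intro conjI allI impI)
      show "S \<inter> VV' j \<subseteq> VV' j" by blast
      fix h assume hh: "automorphism (VV' j) (EE' j) h \<and> (\<forall>s\<in>S \<inter> VV' j. h s = s)"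
      define f where "f = (\<lambda>x. if x \<in> VV' j then h x else x)"
      have fa: "automorphism V E f" unfolding f_def using ext_aut[OF j] hh by blast
      have "\<forall>s\<in>S. f s = s" unfolding f_def using hh by auto
      then have "\<forall>v\<in>V. f v = v" using fs fa unfolding fixing_set_def by blast
      then show "\<forall>v\<in>VV' j. h v = v" using sub[OF j] unfolding f_def by force
    qed
  qed
next
  assume all: "\<forall>i\<le>l. fixing_set (VV' i) (EE' i) (S \<inter> VV' i)"
  show "fixing_set V E S" unfolding fixing_set_def
  proof (intro conjI allI impI)
    show "S \<subseteq> V" by fact
    fix f assume ff: "automorphism V E f \<and> (\<forall>s\<in>S. f s = s)"
    show "\<forall>v\<in>V. f v = v"
    proof
      fix v assume "v \<in> V"
      then obtain j where j: "j \<le> l" "v \<in> VV' j" using memV by blast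
      have "automorphism (VV' j) (EE' j) f" using restr_aut[OF _ j(1)] ff by blast
      moreover have "\<forall>s\<in>S \<inter> VV' j. f s = s" using ff by blast
      ultimately show "f v = v" using all j unfolding fixing_set_def by blast
    qed
  qed
qed

lemma part2: "Fix V E = (\<Sum>i\<le>l. Fix (VV' i) (EE' i))"
proof -
  have "\<forall>j\<in>{..l}. \<exists>S. fixing_set (VV' j) (EE' j) S \<and> card S = Fix (VV' j) (EE' j)"
    using Fix_attained(1)[OF finj] by blast
  then obtain Sf where Sf: "\<And>j. j \<in> {..l} \<Longrightarrow> fixing_set (VV' j) (EE' j) (Sf j) \<and> card (Sf j) = Fix (VV' j) (EE' j)"
    by metis
  have Sfsub: "\<And>j. j \<le> l \<Longrightarrow> Sf j \<subseteq> VV' j" using Sf unfolding fixing_set_def by blast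
  define S where "S = (\<Union>j\<le>l. Sf j)"
  have Ssub: "S \<subseteq> V" unfolding S_def using Sfsub sub by blast
  have Sint: "S \<inter> VV' j = Sf j" if j: "j \<le> l" for j
  proof
    show "S \<inter> VV' j \<subseteq> Sf j"
    proof
      fix x assume "x \<in> S \<inter> VV' j"
      then obtain i where i: "i \<le> l" "x \<in> Sf i" "x \<in> VV' j" unfolding S_def by blast
      then have "x \<in> VV' i" using Sfsub by blast
      then have "i = j" using C1[OF i(1) j] i(3) by blast
      then show "x \<in> Sf j" using i by simp
    qed
    show "Sf j \<subseteq> S \<inter> VV' j" unfolding S_def using j Sfsub[OF j] by blast
  qed
  have Sfix: "fixing_set V E S" using part1[OF Ssub] Sint Sf by simp
  have cardS: "card S = (\<Sum>j\<le>l. card (Sf j))" unfolding S_def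
  proof (rule card_UN_disjoint)
    show "finite {..l}" by simp
    show "\<forall>i\<in>{..l}. finite (Sf i)" using Sfsub finj finite_subset by blast
    show "\<forall>i\<in>{..l}. \<forall>j\<in>{..l}. i \<noteq> j \<longrightarrow> Sf i \<inter> Sf j = {}"
    proof (intro ballI impI)
      fix i j assume ij: "i \<in> {..l}" "j \<in> {..l}" "i \<noteq> j"
      then have "VV' i \<inter> VV' j = {}" using C1 by simp
      moreover have "Sf i \<subseteq> VV' i" "Sf j \<subseteq> VV' j" using ij Sfsub by simp_all
      ultimately show "Sf i \<inter> Sf j = {}" by blast
    qed
  qed
  show ?thesis
  proof (rule Fix_char[OF fin Sfix])
    show "card S = (\<Sum>i\<le>l. Fix (VV' i) (EE' i))" using cardS Sf by simp
    fix T assume T: "fixing_set V E T"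
    then have Tsub: "T \<subseteq> V" unfolding fixing_set_def by blast
    have Tall: "\<forall>i\<le>l. fixing_set (VV' i) (EE' i) (T \<inter> VV' i)" using part1[OF Tsub] T by blast
    have "T = (\<Union>j\<le>l. T \<inter> VV' j)" using Tsub C2 by blast
    then have "card T = card (\<Union>j\<le>l. T \<inter> VV' j)" by simp
    also have "\<dots> = (\<Sum>j\<le>l. card (T \<inter> VV' j))"
    proof (rule card_UN_disjoint)
      show "finite {..l}" by simp
      show "\<forall>i\<in>{..l}. finite (T \<inter> VV' i)" using finj by blast
      show "\<forall>i\<in>{..l}. \<forall>j\<in>{..l}. i \<noteq> j \<longrightarrow> (T \<inter> VV' i) \<inter> (T \<inter> VV' j) = {}"
      proof (intro ballI impI)
        fix i j assume ij: "i \<in> {..l}" "j \<in> {..l}" "i \<noteq> j"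
        then have "VV' i \<inter> VV' j = {}" using C1 by simp
        then show "(T \<inter> VV' i) \<inter> (T \<inter> VV' j) = {}" by blast
      qed
    qed
    finally have cT: "card T = (\<Sum>j\<le>l. card (T \<inter> VV' j))" .
    have "(\<Sum>i\<le>l. Fix (VV' i) (EE' i)) \<le> (\<Sum>j\<le>l. card (T \<inter> VV' j))"
    proof (rule sum_mono)
      fix j assume "j \<in> {..l}"
      then show "Fix (VV' j) (EE' j) \<le> card (T \<inter> VV' j)"
        using Fix_attained(2)[OF finj] Tall by simp
    qed
    then show "(\<Sum>i\<le>l. Fix (VV' i) (EE' i)) \<le> card T" using cT by simp
  qed
qed

end



locale cd =
  fixes V :: "'a set" and E :: "'a set set" and k :: nat and VV :: "nat \<Rightarrow> 'a set"
    and EE :: "nat \<Rightarrow> 'a set set" and AA BB :: "nat \<Rightarrow> 'a set"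
  assumes G: "graph V E" and CD: "canon_decomp V E k VV EE AA BB"
begin

lemma disj: "i \<le> k \<Longrightarrow> j \<le> k \<Longrightarrow> i \<noteq> j \<Longrightarrow> VV i \<inter> VV j = {}"
  using CD unfolding canon_decomp_def by blast
lemma gr: "i \<le> k \<Longrightarrow> graph (VV i) (EE i)"
  using CD unfolding canon_decomp_def by blast
lemma ks: "1 \<le> i \<Longrightarrow> i \<le> k \<Longrightarrow> VV i \<noteq> {}" "1 \<le> i \<Longrightarrow> i \<le> k \<Longrightarrow> KS_partition (VV i) (EE i) (AA i) (BB i)"
  using CD unfolding canon_decomp_def by blast+
lemma v0: "1 \<le> k \<Longrightarrow> VV 0 \<noteq> {}"
  using CD unfolding canon_decomp_def by blast
lemma ind: "i \<le> k \<Longrightarrow> indecomposable (VV i) (EE i)"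
  using CD unfolding canon_decomp_def by blast
lemma Vdef: "V = (\<Union>i\<le>k. VV i)"
  using CD unfolding canon_decomp_def by blast
lemma Edef: "E = (\<Union>i\<le>k. EE i) \<union> {{u, v} | u v. \<exists>i j. j < i \<and> i \<le> k \<and> u \<in> AA i \<and> v \<in> VV j}"
  using CD unfolding canon_decomp_def by blast

lemma finV: "finite V" using G unfolding graph_def by blast

lemma finVV: "i \<le> k \<Longrightarrow> finite (VV i)" using gr unfolding graph_def by blast

lemma VVsub: "i \<le> k \<Longrightarrow> VV i \<subseteq> V" using Vdef by blast

lemma memV: "x \<in> V \<Longrightarrow> \<exists>i\<le>k. x \<in> VV i" using Vdef by blast

lemma uc: "x \<in> VV i \<Longrightarrow> x \<in> VV j \<Longrightarrow> i \<le> k \<Longrightarrow> j \<le> k \<Longrightarrow> i = j"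
  using disj by blast

lemma irr: "{u} \<notin> E"
proof
  assume "{u} \<in> E"
  then obtain a b where "a \<noteq> b" "{u} = {a,b}" using G unfolding graph_def by blast
  then show False by (metis doubleton_eq_iff insert_absorb2)
qed

lemma EEsub: "i \<le> k \<Longrightarrow> {u,v} \<in> EE i \<Longrightarrow> u \<in> VV i \<and> v \<in> VV i"
proof -
  assume i: "i \<le> k" and e: "{u,v} \<in> EE i"
  then obtain a b where ab: "a \<in> VV i" "b \<in> VV i" "{u,v} = {a,b}" using gr[OF i] unfolding graph_def by blast
  then have "u \<in> {a,b}" "v \<in> {a,b}" by (metis insertI1, metis insertI1 insert_commute)
  then show ?thesis using ab by blast
qed

lemma EEirr: "i \<le> k \<Longrightarrow> {u} \<notin> EE i"
proof
  assume i: "i \<le> k" and "{u} \<in> EE i"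
  then obtain a b where "a \<noteq> b" "{u} = {a,b}" using gr[OF i] unfolding graph_def by blast
  then show False by (metis doubleton_eq_iff insert_absorb2)
qed

lemma AAsub: "1 \<le> i \<Longrightarrow> i \<le> k \<Longrightarrow> AA i \<subseteq> VV i"
  using ks(2) unfolding KS_partition_def by blast

lemma BBeq: "1 \<le> i \<Longrightarrow> i \<le> k \<Longrightarrow> BB i = VV i - AA i"
  using ks(2) unfolding KS_partition_def by blast

lemma EmemI1: "i \<le> k \<Longrightarrow> e \<in> EE i \<Longrightarrow> e \<in> E"
  by (subst Edef) blast

lemma EmemI2: "j < i \<Longrightarrow> i \<le> k \<Longrightarrow> a \<in> AA i \<Longrightarrow> b \<in> VV j \<Longrightarrow> {a,b} \<in> E"
  by (subst Edef) blast

lemma EmemE: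
  assumes "e \<in> E"
  obtains (a) i' where "i' \<le> k" "e \<in> EE i'"
    | (b) a b i' j' where "e = {a,b}" "j' < i'" "i' \<le> k" "a \<in> AA i'" "b \<in> VV j'"
proof -
  have "e \<in> (\<Union>i\<le>k. EE i) \<union> {{u, v} | u v. \<exists>i j. j < i \<and> i \<le> k \<and> u \<in> AA i \<and> v \<in> VV j}"
    using assms by (subst (asm) Edef)
  then show ?thesis using that by blast
qed

lemma same:
  assumes i: "i \<le> k" and u: "u \<in> VV i" and v: "v \<in> VV i"
  shows "{u,v} \<in> E \<longleftrightarrow> {u,v} \<in> EE i"
proof
  assume "{u,v} \<in> EE i"
  then show "{u,v} \<in> E" using EmemI1 i by blast
next
  assume "{u,v} \<in> E"
  then show "{u,v} \<in> EE i"
  proof (cases rule: EmemE)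
    case (a i')
    then have "u \<in> VV i'" using EEsub by blast
    then have "i' = i" using uc[OF u _ i a(1)] by blast
    then show ?thesis using a by simp
  next
    case (b a b i' j')
    have aV: "a \<in> VV i'" using AAsub[of i'] b by auto
    have bj: "j' \<le> k" using b by simp
    have "a \<in> {u,v}" "b \<in> {u,v}" by (simp_all add: b(1))
    then have "a \<in> VV i" "b \<in> VV i" using u v by blast+
    then have "i' = i" "j' = i" using uc[OF _ aV i b(3)] uc[OF _ b(5) i bj] by blast+
    then show ?thesis using b(2) by simp
  qed
qed

lemma diff:
  assumes i: "i \<le> k" and ji: "j < i" and u: "u \<in> VV i" and v: "v \<in> VV j"
  shows "{u,v} \<in> E \<longleftrightarrow> u \<in> AA i"
proof
  assume "u \<in> AA i"
  then show "{u,v} \<in> E" using EmemI2 ji i v by blast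
next
  have jk: "j \<le> k" using ji i by simp
  assume "{u,v} \<in> E"
  then show "u \<in> AA i"
  proof (cases rule: EmemE)
    case (a i')
    then have "u \<in> VV i'" "v \<in> VV i'" using EEsub by blast+
    then have "i' = i" "i' = j" using uc[OF u _ i a(1)] uc[OF v _ jk a(1)] by blast+
    then show ?thesis using ji by simp
  next
    case (b a b i' j')
    have aV: "a \<in> VV i'" using AAsub[of i'] b by auto
    have bj: "j' \<le> k" using b by simp
    show ?thesis
    proof (cases "u = a")
      case True
      then have "i' = i" using uc[OF u _ i b(3)] aV by blast
      then show ?thesis using b(4) True by simp
    next
      case False
      have uab: "u \<in> {a,b}" "v \<in> {a,b}" by (simp_all add: b(1)[symmetric])
      then have ub: "u = b" using False by blast
      have "u \<noteq> v" using u v uc[OF _ _ i jk] ji by blast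
      then have va: "v = a" using uab ub by blast
      have "j' = i" using uc[OF u _ i bj] ub b(5) by blast
      moreover have "i' = j" using uc[OF v _ jk b(3)] va aV by blast
      ultimately show ?thesis using b(2) ji by simp
    qed
  qed
qed

lemma ks_clique: "1 \<le> i \<Longrightarrow> i \<le> k \<Longrightarrow> a \<in> AA i \<Longrightarrow> b \<in> AA i \<Longrightarrow> a \<noteq> b \<Longrightarrow> {a,b} \<in> E"
proof -
  assume h: "1 \<le> i" "i \<le> k" "a \<in> AA i" "b \<in> AA i" "a \<noteq> b"
  then have "{a,b} \<in> EE i" using ks(2)[OF h(1,2)] unfolding KS_partition_def by blast
  then show ?thesis using EmemI1 h(2) by blast
qed

lemma ks_indep: "1 \<le> i \<Longrightarrow> i \<le> k \<Longrightarrow> a \<in> VV i - AA i \<Longrightarrow> b \<in> VV i - AA i \<Longrightarrow> {a,b} \<notin> E"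
proof -
  assume h: "1 \<le> i" "i \<le> k" "a \<in> VV i - AA i" "b \<in> VV i - AA i"
  then have "a \<in> BB i" "b \<in> BB i" using BBeq by auto
  then have "{a,b} \<notin> EE i" using ks(2)[OF h(1,2)] unfolding KS_partition_def by blast
  then show ?thesis using same[OF h(2)] h(3,4) by blast
qed

lemma indec: assumes i: "i \<le> k" shows "indec_adj E (VV i)"
  unfolding indec_adj_def
proof
  assume "\<exists>X A. X \<noteq> {} \<and> X \<noteq> VV i \<and> splitmod E (VV i) X A"
  then obtain X A where X: "X \<noteq> {}" "X \<noteq> VV i" and sm: "splitmod E (VV i) X A" by blast
  note d = splitmodD[OF sm]
  define Y where "Y = VV i - X"
  have eq: "\<And>u v. u \<in> VV i \<Longrightarrow> v \<in> VV i \<Longrightarrow> {u,v} \<in> EE i \<longleftrightarrow> {u,v} \<in> E" using same[OF i] by blast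
  have KS: "KS_partition X (induced_edges (EE i) X) A (X - A)"
    unfolding KS_partition_def induced_edges_def
  proof (intro conjI ballI impI)
    show "A \<union> (X - A) = X" using d(1) by blast
    show "A \<inter> (X - A) = {}" by blast
    fix u v
    show "u \<in> A \<Longrightarrow> v \<in> A \<Longrightarrow> u \<noteq> v \<Longrightarrow> {u, v} \<in> {e \<in> EE i. e \<subseteq> X}"
    proof -
      assume uv: "u \<in> A" "v \<in> A" "u \<noteq> v"
      then have "{u,v} \<in> E" using d(3) by blast
      moreover have "u \<in> VV i" "v \<in> VV i" "u \<in> X" "v \<in> X" using uv d(1,2) by blast+
      ultimately show ?thesis using eq by blast
    qed
    show "u \<in> X - A \<Longrightarrow> v \<in> X - A \<Longrightarrow> {u, v} \<notin> {e \<in> EE i. e \<subseteq> X}"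
    proof -
      assume uv: "u \<in> X - A" "v \<in> X - A"
      then have "{u,v} \<notin> E" using d(4) by blast
      moreover have "u \<in> VV i" "v \<in> VV i" using uv d(1,2) by blast+
      ultimately show ?thesis using eq by blast
    qed
  qed
  have cr: "\<forall>u\<in>X. \<forall>v\<in>Y. {u, v} \<in> EE i \<longleftrightarrow> u \<in> A"
  proof (intro ballI)
    fix u v assume u: "u \<in> X" and v: "v \<in> Y"
    have "v \<in> VV i - X" using v Y_def by simp
    then have "{u,v} \<in> E \<longleftrightarrow> u \<in> A" using d(5) u by blast
    moreover have "u \<in> VV i" "v \<in> VV i" using u v d(2) Y_def by blast+
    ultimately show "{u, v} \<in> EE i \<longleftrightarrow> u \<in> A" using eq by blast
  qed
  have "X \<union> Y = VV i" "X \<inter> Y = {}" "Y \<noteq> {}" using d(2) X Y_def by blast+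
  then show False using ind[OF i] KS cr X(1) unfolding indecomposable_def by blast
qed

lemma card2: "i \<le> k \<Longrightarrow> VV i \<noteq> {} \<Longrightarrow> card (VV i) \<noteq> 1 \<Longrightarrow> card (VV i) \<ge> 2"
proof -
  assume h: "i \<le> k" "VV i \<noteq> {}" "card (VV i) \<noteq> 1"
  then have "card (VV i) \<noteq> 0" using finVV by simp
  then show ?thesis using h(3) by linarith
qed

lemma single: "card (VV i) = 1 \<Longrightarrow> x \<in> VV i \<Longrightarrow> VV i = {x}"
  by (metis card_1_singletonE singletonD)

lemma pres_of_aut: "automorphism V E f \<Longrightarrow> W \<subseteq> V \<Longrightarrow> f ` W = W \<Longrightarrow> pres E W f"
proof -
  assume a: "automorphism V E f" "W \<subseteq> V" "f ` W = W"
  have "inj_on f V" using a(1) unfolding automorphism_def bij_betw_def by blast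
  then have "inj_on f W" using a(2) inj_on_subset by blast
  then have "bij_betw f W W" using a(3) unfolding bij_betw_def by blast
  moreover have "\<forall>u\<in>W. \<forall>v\<in>W. {u,v} \<in> E \<longleftrightarrow> {f u, f v} \<in> E" using a(1,2) unfolding automorphism_def by blast
  ultimately show ?thesis unfolding pres_def by blast
qed

end



locale ccd = cd +
  fixes l :: nat and VV' :: "nat \<Rightarrow> 'a set" and EE' :: "nat \<Rightarrow> 'a set set"
    and AA' BB' :: "nat \<Rightarrow> 'a set" and g :: "nat \<Rightarrow> nat"
  assumes g0: "g 0 = 0"
  and gS: "\<forall>i<k. g (Suc i) = (if merge_next k VV AA i then g i else Suc (g i))"
  and gk: "g k = l"
  and VV'def: "\<forall>j\<le>l. VV' j = (\<Union>i\<in>{i. i \<le> k \<and> g i = j}. VV i)"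
  and EE'def: "\<forall>i\<le>k. EE' (g i) =
            (if card (VV i) = 1
             then (if typeK k VV AA i then complete_edges (VV' (g i)) else {})
             else EE i)"
  and AA'def: "\<forall>i. 1 \<le> i \<and> i \<le> k \<longrightarrow> (AA' (g i), BB' (g i)) =
            (if card (VV i) = 1
             then (if AA i = VV i then (VV' (g i), {}) else ({}, VV' (g i)))
             else (AA i, BB i))"
begin

lemma gSuc: "i < k \<Longrightarrow> g (Suc i) = (if merge_next k VV AA i then g i else Suc (g i))"
  using gS by blast

lemma g_mono_aux: "\<forall>i. i \<le> n \<longrightarrow> n \<le> k \<longrightarrow> g i \<le> g n"
proof (induction n)
  case 0
  then show ?case by simp
next
  case (Suc n)
  show ?case
  proof (intro allI impI)
    fix i assume i: "i \<le> Suc n" "Suc n \<le> k"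
    show "g i \<le> g (Suc n)"
    proof (cases "i = Suc n")
      case True then show ?thesis by simp
    next
      case False
      then have "i \<le> n" using i by simp
      then have "g i \<le> g n" using Suc.IH i by simp
      moreover have "g n \<le> g (Suc n)" using gSuc[of n] i by simp
      ultimately show ?thesis by simp
    qed
  qed
qed

lemma g_mono: "i \<le> i' \<Longrightarrow> i' \<le> k \<Longrightarrow> g i \<le> g i'"
  using g_mono_aux by blast

lemma g_le: "i \<le> k \<Longrightarrow> g i \<le> l"
  using g_mono[of i k] gk by simp

lemma g_surj_aux: "\<forall>i. i \<le> k \<longrightarrow> (\<forall>j\<le>g i. \<exists>i'\<le>i. g i' = j)"
proof (intro allI)
  fix i show "i \<le> k \<longrightarrow> (\<forall>j\<le>g i. \<exists>i'\<le>i. g i' = j)"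
  proof (induction i)
    case 0
    then show ?case using g0 by auto
  next
    case (Suc i)
    show ?case
    proof (intro impI allI)
      fix j assume h: "Suc i \<le> k" "j \<le> g (Suc i)"
      show "\<exists>i'\<le>Suc i. g i' = j"
      proof (cases "j = g (Suc i)")
        case True then show ?thesis by blast
      next
        case False
        then have "j \<le> g i" using h gSuc[of i] by (simp split: if_splits)
        then obtain i' where "i' \<le> i" "g i' = j" using Suc.IH h by auto
        then show ?thesis using le_SucI by blast
      qed
    qed
  qed
qed

lemma g_surj: "j \<le> l \<Longrightarrow> \<exists>i\<le>k. g i = j"
  using g_surj_aux gk by (metis order.refl order.trans)

lemma g_merge: "i < k \<Longrightarrow> g (Suc i) = g i \<Longrightarrow> merge_next k VV AA i"
  using gSuc by (metis n_not_Suc_n)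

lemma g_chain: "i \<le> t \<Longrightarrow> t < i' \<Longrightarrow> i' \<le> k \<Longrightarrow> g i = g i' \<Longrightarrow> merge_next k VV AA t"
proof -
  assume h: "i \<le> t" "t < i'" "i' \<le> k" "g i = g i'"
  have "g i \<le> g t" using g_mono[of i t] h by simp
  moreover have "g (Suc t) \<le> g i'" using g_mono[of "Suc t" i'] h by simp
  moreover have "g t \<le> g (Suc t)" using gSuc[of t] h by simp
  ultimately have "g (Suc t) = g t" using h(4) by simp
  then show ?thesis using g_merge h by simp
qed

lemma single_grp: "i \<le> k \<Longrightarrow> i' \<le> k \<Longrightarrow> i \<noteq> i' \<Longrightarrow> g i = g i' \<Longrightarrow> card (VV i) = 1"
proof -
  assume h: "i \<le> k" "i' \<le> k" "i \<noteq> i'" "g i = g i'"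
  show ?thesis
  proof (cases "i < i'")
    case True
    then have "merge_next k VV AA i" using g_chain[of i i i'] h by simp
    then show ?thesis unfolding merge_next_def by blast
  next
    case False
    then have "i' \<le> i - 1" "i - 1 < i" using h by auto
    then have "merge_next k VV AA (i - 1)" using g_chain[of i' "i - 1" i] h by simp
    moreover have "Suc (i - 1) = i" using \<open>i - 1 < i\<close> by simp
    ultimately show ?thesis unfolding merge_next_def by metis
  qed
qed

lemma VV'mem: "j \<le> l \<Longrightarrow> x \<in> VV' j \<longleftrightarrow> (\<exists>i\<le>k. g i = j \<and> x \<in> VV i)"
  using VV'def by auto

lemma C1: "j \<le> l \<Longrightarrow> j' \<le> l \<Longrightarrow> j \<noteq> j' \<Longrightarrow> VV' j \<inter> VV' j' = {}"
proof -
  assume h: "j \<le> l" "j' \<le> l" "j \<noteq> j'"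
  show ?thesis
  proof (rule ccontr)
    assume "VV' j \<inter> VV' j' \<noteq> {}"
    then obtain x where "x \<in> VV' j" "x \<in> VV' j'" by blast
    then obtain i i' where "i \<le> k" "g i = j" "x \<in> VV i" "i' \<le> k" "g i' = j'" "x \<in> VV i'"
      using VV'mem h by meson
    then show False using uc h(3) by blast
  qed
qed

lemma C2: "V = (\<Union>j\<le>l. VV' j)"
proof
  show "V \<subseteq> (\<Union>j\<le>l. VV' j)"
  proof
    fix x assume "x \<in> V"
    then obtain i where i: "i \<le> k" "x \<in> VV i" using memV by blast
    then have "x \<in> VV' (g i)" using VV'mem g_le by blast
    then show "x \<in> (\<Union>j\<le>l. VV' j)" using g_le i by blast
  qed
  show "(\<Union>j\<le>l. VV' j) \<subseteq> V"
  proof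
    fix x assume "x \<in> (\<Union>j\<le>l. VV' j)"
    then obtain j where "j \<le> l" "x \<in> VV' j" by blast
    then obtain i where "i \<le> k" "x \<in> VV i" using VV'mem by blast
    then show "x \<in> V" using VVsub by blast
  qed
qed

lemma nonsingle_grp:
  assumes i: "i \<le> k" and c: "card (VV i) \<noteq> 1"
  shows "VV' (g i) = VV i" "EE' (g i) = EE i"
proof -
  have gl: "g i \<le> l" using g_le i by simp
  show "VV' (g i) = VV i"
  proof
    show "VV' (g i) \<subseteq> VV i"
    proof
      fix x assume "x \<in> VV' (g i)"
      then obtain i' where i': "i' \<le> k" "g i' = g i" "x \<in> VV i'" using VV'mem gl by blast
      then have "i' = i" using single_grp[OF i i'(1)] c by metis
      then show "x \<in> VV i" using i' by simp
    qed
    show "VV i \<subseteq> VV' (g i)" using VV'mem gl i by blast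
  qed
  show "EE' (g i) = EE i" using EE'def i c by simp
qed

lemma EE'at: "i \<le> k \<Longrightarrow> EE' (g i) =
            (if card (VV i) = 1
             then (if typeK k VV AA i then complete_edges (VV' (g i)) else {})
             else EE i)"
  using EE'def by blast

lemma C3:
  assumes j: "j \<le> l" and u: "u \<in> VV' j" and v: "v \<in> VV' j"
  shows "{u,v} \<in> EE' j \<longleftrightarrow> {u,v} \<in> E"
proof -
  obtain iu where iu: "iu \<le> k" "g iu = j" "u \<in> VV iu" using VV'mem j u by blast
  obtain iv where iv: "iv \<le> k" "g iv = j" "v \<in> VV iv" using VV'mem j v by blast
  have ord: "{x,y} \<in> EE' j \<longleftrightarrow> {x,y} \<in> E" if x: "x \<in> VV ix" "ix \<le> k" "g ix = j" and y: "y \<in> VV iy" "iy \<le> k" "g iy = j"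
     and lt: "iy < ix" for x y ix iy
  proof -
    have c1: "card (VV ix) = 1" using single_grp[OF x(2) y(2)] x y lt by simp
    have ix1: "ix \<noteq> 0" using lt by simp
    have xy: "x \<noteq> y" using uc x y lt by blast
    have "{x,y} \<in> E \<longleftrightarrow> x \<in> AA ix" using diff[OF x(2) lt x(1) y(1)] .
    also have "\<dots> \<longleftrightarrow> AA ix = VV ix"
    proof -
      have "VV ix = {x}" using single[OF c1 x(1)] .
      moreover have "AA ix \<subseteq> VV ix" using AAsub[of ix] ix1 x(2) by simp
      ultimately show ?thesis by auto
    qed
    finally have e1: "{x,y} \<in> E \<longleftrightarrow> AA ix = VV ix" .
    have "EE' (g ix) = (if typeK k VV AA ix then complete_edges (VV' (g ix)) else {})"
      using EE'def x(2) c1 by simp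
    moreover have "typeK k VV AA ix = (AA ix = VV ix)" unfolding typeK_def using ix1 by simp
    ultimately have "EE' j = (if AA ix = VV ix then complete_edges (VV' j) else {})"
      using x(3) by simp
    moreover have "{x,y} \<in> complete_edges (VV' j)"
      unfolding complete_edges_def using VV'mem[OF j] x y xy by blast
    ultimately show ?thesis using e1 by simp
  qed
  consider "iu = iv" | "iv < iu" | "iu < iv" by linarith
  then show ?thesis
  proof cases
    case 1
    show ?thesis
    proof (cases "card (VV iu) = 1")
      case True
      have "u = v" using single[OF True iu(3)] iv(3) 1 by simp
      have "EE' j = (if typeK k VV AA iu then complete_edges (VV' j) else {})"
        using EE'at[OF iu(1)] True iu(2) by simp
      moreover have "{u} \<notin> complete_edges (VV' j)"
        unfolding complete_edges_def by (auto simp: doubleton_eq_iff)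
      ultimately show ?thesis using \<open>u = v\<close> irr by simp
    next
      case False
      then have "EE' j = EE iu" using nonsingle_grp iu by metis
      then show ?thesis using same[OF iu(1) iu(3)] iv(3) 1 by simp
    qed
  next
    case 2
    then show ?thesis using ord[OF iu(3,1,2) iv(3,1,2)] by simp
  next
    case 3
    then have "{v,u} \<in> EE' j \<longleftrightarrow> {v,u} \<in> E" using ord[OF iv(3,1,2) iu(3,1,2)] by simp
    then show ?thesis by (simp add: insert_commute)
  qed
qed

lemma AA'eq:
  assumes i: "1 \<le> i" "i \<le> k"
  shows "AA' (g i) = (if card (VV i) = 1 then (if AA i = VV i then VV' (g i) else {}) else AA i)"
proof -
  have "(AA' (g i), BB' (g i)) = (if card (VV i) = 1 then (if AA i = VV i then (VV' (g i), {}) else ({}, VV' (g i))) else (AA i, BB i))"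
    using AA'def i by blast
  then show ?thesis by (cases "card (VV i) = 1"; cases "AA i = VV i") auto
qed

lemma C4:
  assumes j: "j \<le> l" and jj: "j' < j" and u: "u \<in> VV' j" and v: "v \<in> VV' j'"
  shows "{u,v} \<in> E \<longleftrightarrow> u \<in> AA' j"
proof -
  obtain iu where iu: "iu \<le> k" "g iu = j" "u \<in> VV iu" using VV'mem j u by blast
  obtain iv where iv: "iv \<le> k" "g iv = j'" "v \<in> VV iv" using VV'mem j jj v by (meson less_imp_le order.trans)
  have lt: "iv < iu"
  proof (rule ccontr)
    assume "\<not> iv < iu"
    then have "iu \<le> iv" by simp
    then have "g iu \<le> g iv" using g_mono iv(1) by simp
    then show False using iu iv jj by simp
  qed
  have i1: "1 \<le> iu" using lt by simp
  have "{u,v} \<in> E \<longleftrightarrow> u \<in> AA iu" using diff[OF iu(1) lt iu(3) iv(3)] .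
  also have "\<dots> \<longleftrightarrow> u \<in> AA' j"
  proof (cases "card (VV iu) = 1")
    case True
    have s: "VV iu = {u}" using single[OF True iu(3)] .
    have "AA iu \<subseteq> VV iu" using AAsub i1 iu by simp
    moreover have "AA' j = (if AA iu = VV iu then VV' j else {})" using AA'eq[OF i1 iu(1)] True iu(2) by simp
    ultimately show ?thesis using s u by auto
  next
    case False
    then show ?thesis using AA'eq[OF i1 iu(1)] iu(2) by simp
  qed
  finally show ?thesis .
qed

lemma C5:
  assumes j1: "1 \<le> j" and j: "j \<le> l" and h: "automorphism (VV' j) (EE' j) h" and u: "u \<in> VV' j"
  shows "h u \<in> AA' j \<longleftrightarrow> u \<in> AA' j"
proof -
  obtain i where i: "i \<le> k" "g i = j" using g_surj j by blast
  have i1: "1 \<le> i" using i j1 g0 by (cases i) auto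
  have hb: "bij_betw h (VV' j) (VV' j)" using h unfolding automorphism_def by blast
  have hu: "h u \<in> VV' j" using hb u bij_betwE by blast
  show ?thesis
  proof (cases "card (VV i) = 1")
    case True
    then have "AA' j = (if AA i = VV i then VV' j else {})" using AA'eq[OF i1 i(1)] i(2) by simp
    then show ?thesis using u hu by simp
  next
    case False
    have VVj: "VV' j = VV i" and EEj: "EE' j = EE i" using nonsingle_grp[OF i(1) False] i(2) by simp_all
    have AAj: "AA' j = AA i" using AA'eq[OF i1 i(1)] False i(2) by simp
    have hb2: "bij_betw h (VV i) (VV i)" using hb VVj by simp
    have hinj: "inj_on h (VV i)" using hb2 bij_betw_imp_inj_on by blast
    have him: "h ` VV i = VV i" using hb2 bij_betw_imp_surj_on by blast
    have hin: "\<And>x. x \<in> VV i \<Longrightarrow> h x \<in> VV i" using hb2 bij_betwE by blast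
    have he: "{x,y} \<in> E \<longleftrightarrow> {h x, h y} \<in> E" if "x \<in> VV i" "y \<in> VV i" for x y
    proof -
      have "{x,y} \<in> EE i \<longleftrightarrow> {h x, h y} \<in> EE i" using h that VVj EEj unfolding automorphism_def by blast
      then show ?thesis using same[OF i(1)] that hin by blast
    qed
    have pr: "pres E (VV i) h" unfolding pres_def using hb2 he by blast
    have sm: "splitmod E (VV i) (VV i) (AA i)"
    proof (rule splitmodI)
      show "AA i \<subseteq> VV i" using AAsub i1 i(1) by simp
      show "VV i \<subseteq> VV i" by simp
      show "\<And>u v. u \<in> AA i \<Longrightarrow> v \<in> AA i \<Longrightarrow> u \<noteq> v \<Longrightarrow> {u, v} \<in> E" using ks_clique i1 i(1) by blast
      show "\<And>u v. u \<in> VV i - AA i \<Longrightarrow> v \<in> VV i - AA i \<Longrightarrow> {u, v} \<notin> E" using ks_indep i1 i(1) by blast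
      show "\<And>u v. u \<in> VV i \<Longrightarrow> v \<in> VV i - VV i \<Longrightarrow> ({u, v} \<in> E) = (u \<in> AA i)" by blast
    qed
    have sm2: "splitmod E (VV i) (VV i) (h ` AA i)" using splitmod_image[OF pr sm] him by simp
    note d1 = splitmodD[OF sm] and d2 = splitmodD[OF sm2]
    have ne: "VV i \<noteq> {}" using ks(1) i1 i(1) by simp
    have eq: "AA i = h ` AA i"
      by (rule uniq[OF indec[OF i(1)] irr finVV[OF i(1)] card2[OF i(1) ne False] d1(1) d1(3) d1(4) d2(1) d2(3) d2(4)])
    have uV: "u \<in> VV i" using u VVj by simp
    have "h u \<in> h ` AA i \<longleftrightarrow> u \<in> AA i" using inj_on_image_mem_iff[OF hinj uV d1(1)] .
    then show ?thesis using AAj eq by simp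
  qed
qed

end



context ccd begin

definition Lo :: "nat \<Rightarrow> 'a set" where "Lo m = {x. \<exists>i\<le>k. g i \<le> m \<and> x \<in> VV i}"

lemma grp:
  assumes m: "1 \<le> m" "m \<le> l"
  obtains i0 i1 where "i0 \<le> i1" "i1 \<le> k" "1 \<le> i0" "\<And>i. i \<le> k \<Longrightarrow> g i = m \<longleftrightarrow> i0 \<le> i \<and> i \<le> i1"
    "\<not> merge_next k VV AA (i0 - 1)" "g i0 = m" "g i1 = m"
proof -
  define I where "I = {i. i \<le> k \<and> g i = m}"
  have fI: "finite I" unfolding I_def by simp
  have neI: "I \<noteq> {}" unfolding I_def using g_surj m by blast
  define i0 where "i0 = Min I"
  define i1 where "i1 = Max I"
  have i0I: "i0 \<in> I" unfolding i0_def using Min_in[OF fI neI] .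
  have i1I: "i1 \<in> I" unfolding i1_def using Max_in[OF fI neI] .
  have lo: "\<And>i. i \<in> I \<Longrightarrow> i0 \<le> i" unfolding i0_def using Min_le[OF fI] by blast
  have hi: "\<And>i. i \<in> I \<Longrightarrow> i \<le> i1" unfolding i1_def using Max_ge[OF fI] by blast
  have g0m: "g i0 = m" "i0 \<le> k" using i0I unfolding I_def by simp_all
  have g1m: "g i1 = m" "i1 \<le> k" using i1I unfolding I_def by simp_all
  have a1: "i0 \<le> i1" using hi i0I by blast
  have a4: "g i = m \<longleftrightarrow> i0 \<le> i \<and> i \<le> i1" if i: "i \<le> k" for i
  proof
    assume "g i = m"
    then have "i \<in> I" unfolding I_def using i by simp
    then show "i0 \<le> i \<and> i \<le> i1" using lo hi by blast
  next
    assume h: "i0 \<le> i \<and> i \<le> i1"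
    have "g i0 \<le> g i" using g_mono[of i0 i] h i by simp
    moreover have "g i \<le> g i1" using g_mono[of i i1] h g1m by simp
    ultimately show "g i = m" using g0m g1m by simp
  qed
  have a3: "1 \<le> i0"
  proof (rule ccontr)
    assume "\<not> 1 \<le> i0"
    then have "i0 = 0" by simp
    then show False using g0m g0 m by simp
  qed
  have a5: "\<not> merge_next k VV AA (i0 - 1)"
  proof
    assume mn: "merge_next k VV AA (i0 - 1)"
    then have lt: "i0 - 1 < k" unfolding merge_next_def by blast
    have s: "Suc (i0 - 1) = i0" using a3 by simp
    have "g (Suc (i0 - 1)) = g (i0 - 1)" using gSuc[OF lt] mn by simp
    then have "g (i0 - 1) = m" using s g0m by simp
    then have "i0 - 1 \<in> I" unfolding I_def using lt by simp
    then have "i0 \<le> i0 - 1" using lo by blast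
    then show False using a3 by simp
  qed
  show ?thesis using that[OF a1 g1m(2) a3 a4 a5 g0m(1) g1m(1)] .
qed

lemma Lo_sub: "Lo m \<subseteq> V" unfolding Lo_def using VVsub by blast

lemma TOP:
  assumes m: "1 \<le> m" "m \<le> l" and pr: "pres E (Lo m) f"
  shows "f ` VV' m = VV' m"
proof -
  obtain i0 i1 where g: "i0 \<le> i1" "i1 \<le> k" "1 \<le> i0" "\<And>i. i \<le> k \<Longrightarrow> g i = m \<longleftrightarrow> i0 \<le> i \<and> i \<le> i1"
    "\<not> merge_next k VV AA (i0 - 1)" "g i0 = m" "g i1 = m"
    using grp[OF m] by blast
  have i0k: "i0 \<le> k" using g by simp
  have Lm: "x \<in> Lo m \<longleftrightarrow> (\<exists>i\<le>i1. x \<in> VV i)" for x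
  proof
    assume "x \<in> Lo m"
    then obtain i where i: "i \<le> k" "g i \<le> m" "x \<in> VV i" unfolding Lo_def by blast
    have "i \<le> i1"
    proof (rule ccontr)
      assume "\<not> i \<le> i1"
      then have "i1 \<le> i" by simp
      then have "g i1 \<le> g i" using g_mono[OF _ i(1)] by simp
      then have "g i = m" using i g by simp
      then show False using g(4)[OF i(1)] \<open>\<not> i \<le> i1\<close> by simp
    qed
    then show "\<exists>i\<le>i1. x \<in> VV i" using i by blast
  next
    assume "\<exists>i\<le>i1. x \<in> VV i"
    then obtain i where i: "i \<le> i1" "x \<in> VV i" by blast
    have "g i \<le> g i1" using g_mono[OF i(1) g(2)] .
    then show "x \<in> Lo m" unfolding Lo_def using i g by (intro CollectI exI[of _ i]) simp
  qed
  have inL: "\<And>i x. i \<le> i1 \<Longrightarrow> x \<in> VV i \<Longrightarrow> x \<in> Lo m" using Lm by blast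
  have VVm: "x \<in> VV' m \<longleftrightarrow> (\<exists>i. i0 \<le> i \<and> i \<le> i1 \<and> x \<in> VV i)" for x
  proof -
    have "x \<in> VV' m \<longleftrightarrow> (\<exists>i\<le>k. g i = m \<and> x \<in> VV i)" using VV'mem m by simp
    also have "\<dots> \<longleftrightarrow> (\<exists>i. i0 \<le> i \<and> i \<le> i1 \<and> x \<in> VV i)"
    proof
      assume "\<exists>i\<le>k. g i = m \<and> x \<in> VV i"
      then obtain i where "i \<le> k" "g i = m" "x \<in> VV i" by blast
      then show "\<exists>i. i0 \<le> i \<and> i \<le> i1 \<and> x \<in> VV i" using g(4) by blast
    next
      assume "\<exists>i. i0 \<le> i \<and> i \<le> i1 \<and> x \<in> VV i"
      then obtain i where i: "i0 \<le> i" "i \<le> i1" "x \<in> VV i" by blast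
      then have "i \<le> k" using g by simp
      then show "\<exists>i\<le>k. g i = m \<and> x \<in> VV i" using g(4) i by blast
    qed
    finally show ?thesis .
  qed
  have finL: "finite (Lo m)" using Lo_sub finV finite_subset by blast
  show ?thesis
  proof (cases "i0 = i1 \<and> card (VV i0) \<noteq> 1")
    case True
    have eqV: "VV' m = VV i0"
    proof (rule set_eqI)
      fix x show "x \<in> VV' m \<longleftrightarrow> x \<in> VV i0" using VVm True by (metis le_antisym order.refl)
    qed
    have sm: "splitmod E (Lo m) (VV i0) (AA i0)"
    proof (rule splitmodI)
      show "AA i0 \<subseteq> VV i0" using AAsub g(3) i0k by simp
      show "VV i0 \<subseteq> Lo m" using inL g(1) by blast
      show "\<And>u v. u \<in> AA i0 \<Longrightarrow> v \<in> AA i0 \<Longrightarrow> u \<noteq> v \<Longrightarrow> {u, v} \<in> E" using ks_clique g(3) i0k by blast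
      show "\<And>u v. u \<in> VV i0 - AA i0 \<Longrightarrow> v \<in> VV i0 - AA i0 \<Longrightarrow> {u, v} \<notin> E" using ks_indep g(3) i0k by blast
      fix u v assume u: "u \<in> VV i0" and v: "v \<in> Lo m - VV i0"
      then obtain i' where i': "i' \<le> i1" "v \<in> VV i'" using Lm by blast
      have "i' \<noteq> i0" using i' v by blast
      then have "i' < i0" using i' True by simp
      then show "({u, v} \<in> E) = (u \<in> AA i0)" using diff[OF i0k _ u i'(2)] by simp
    qed
    have ne: "VV i0 \<noteq> {}" using ks(1) g(3) i0k by simp
    have c: "card (VV i0) \<noteq> 1" using True by blast
    have "f ` VV i0 = VV i0"
      by (rule L_A[OF pr finL _ indec[OF i0k] card2[OF i0k ne c] sm]) (use inL g(1) in blast)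
    then show ?thesis using eqV by simp
  next
    case False
    have sing: "card (VV i) = 1" if i: "i0 \<le> i" "i \<le> i1" for i
    proof (cases "i0 = i1")
      case True
      then show ?thesis using False i by (metis le_antisym)
    next
      case ne: False
      have ik: "i \<le> k" using i g by simp
      have gi: "g i = m" using g(4)[OF ik] i by simp
      show ?thesis
      proof (cases "i = i0")
        case True
        then show ?thesis using single_grp[OF i0k g(2) ne] g(6,7) by simp
      next
        case False
        then show ?thesis using single_grp[OF ik i0k False] gi g(6) by simp
      qed
    qed
    have typ_aux: "\<forall>d. i0 + d \<le> i1 \<longrightarrow> (AA (i0 + d) = VV (i0 + d) \<longleftrightarrow> AA i0 = VV i0)"
    proof (intro allI)
      fix d show "i0 + d \<le> i1 \<longrightarrow> (AA (i0 + d) = VV (i0 + d) \<longleftrightarrow> AA i0 = VV i0)"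
      proof (induction d)
        case 0 then show ?case by simp
      next
        case (Suc d)
        show ?case
        proof
          assume h: "i0 + Suc d \<le> i1"
          define t where "t = i0 + d"
          have tk: "t < k" using h g t_def by simp
          have "g t = m" using g(4)[of t] h t_def g by simp
          moreover have "g (Suc t) = m" using g(4)[of "Suc t"] h t_def g by simp
          ultimately have "merge_next k VV AA t" using g_merge[OF tk] by simp
          moreover have "t \<noteq> 0" using g(3) t_def by simp
          ultimately have "AA t = VV t \<longleftrightarrow> AA (Suc t) = VV (Suc t)" unfolding merge_next_def by simp
          moreover have "AA t = VV t \<longleftrightarrow> AA i0 = VV i0" using Suc.IH h t_def by simp
          ultimately show "AA (i0 + Suc d) = VV (i0 + Suc d) \<longleftrightarrow> AA i0 = VV i0" using t_def by simp
        qed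
      qed
    qed
    have typq: "AA i = VV i \<longleftrightarrow> AA i0 = VV i0" if "i0 \<le> i" "i \<le> i1" for i
      using typ_aux[rule_format, of "i - i0"] that by simp
    define j where "j = i0 - 1"
    have Sj: "Suc j = i0" using g(3) j_def by simp
    have jk: "j < k" "j \<le> k" "j \<le> i1" using Sj g by simp_all
    have mergeJ: False if c: "card (VV j) = 1" and t: "j = 0 \<or> (AA j = VV j \<longleftrightarrow> AA i0 = VV i0)"
    proof -
      have "card (VV (Suc j)) = 1" using sing[of i0] g Sj by simp
      then have "merge_next k VV AA j" unfolding merge_next_def using jk c t Sj by simp
      then show False using g(5) j_def by simp
    qed
    show ?thesis
    proof (cases "AA i0 = VV i0")
      case K: True
      have allK: "AA i = VV i" if "i0 \<le> i" "i \<le> i1" for i using typq[OF that] K by simp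
      have eq: "VV' m = {x \<in> Lo m. \<forall>y\<in>Lo m. y \<noteq> x \<longrightarrow> {x,y} \<in> E}"
      proof (rule set_eqI)
        fix x
        show "x \<in> VV' m \<longleftrightarrow> x \<in> {x \<in> Lo m. \<forall>y\<in>Lo m. y \<noteq> x \<longrightarrow> {x,y} \<in> E}"
        proof
          assume "x \<in> VV' m"
          then obtain i where i: "i0 \<le> i" "i \<le> i1" "x \<in> VV i" using VVm by blast
          have ik: "i \<le> k" using i g by simp
          have xL: "x \<in> Lo m" using inL i by blast
          have "{x,y} \<in> E" if y: "y \<in> Lo m" "y \<noteq> x" for y
          proof -
            obtain i' where i': "i' \<le> i1" "y \<in> VV i'" using Lm y by blast
            have ik': "i' \<le> k" using i' g by simp
            have "i' \<noteq> i" using single[OF sing[OF i(1,2)] i(3)] i' y by blast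
            then consider "i' < i" | "i < i'" by linarith
            then show ?thesis
            proof cases
              case 1
              then show ?thesis using diff[OF ik 1 i(3) i'(2)] allK[OF i(1,2)] i(3) by simp
            next
              case 2
              have "AA i' = VV i'" using allK[of i'] i i' 2 by simp
              then have "{y,x} \<in> E" using diff[OF ik' 2 i'(2) i(3)] i'(2) by simp
              then show ?thesis by (simp add: insert_commute)
            qed
          qed
          then show "x \<in> {x \<in> Lo m. \<forall>y\<in>Lo m. y \<noteq> x \<longrightarrow> {x,y} \<in> E}" using xL by blast
        next
          assume "x \<in> {x \<in> Lo m. \<forall>y\<in>Lo m. y \<noteq> x \<longrightarrow> {x,y} \<in> E}"
          then have xL: "x \<in> Lo m" and un: "\<And>y. y \<in> Lo m \<Longrightarrow> y \<noteq> x \<Longrightarrow> {x,y} \<in> E" by blast+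
          obtain i where i: "i \<le> i1" "x \<in> VV i" using Lm xL by blast
          have ik: "i \<le> k" using i g by simp
          show "x \<in> VV' m"
          proof (cases "i0 \<le> i")
            case True then show ?thesis using VVm i by blast
          next
            case False
            then have ij: "i \<le> j" using j_def by simp
            show ?thesis
            proof (cases "i < j")
              case True
              have j1: "1 \<le> j" using True by simp
              have "VV j \<subseteq> AA j"
              proof
                fix v assume v: "v \<in> VV j"
                have "v \<noteq> x" using uc[OF v _ jk(2) ik] i True by auto
                then have "{x,v} \<in> E" using un inL[OF jk(3) v] by blast
                then have "{v,x} \<in> E" by (simp add: insert_commute)
                then show "v \<in> AA j" using diff[OF jk(2) True v i(2)] by simp
              qed
              then have AJ: "AA j = VV j" using AAsub[OF j1 jk(2)] by blast
              show ?thesis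
              proof (cases "card (VV j) = 1")
                case True
                then show ?thesis using mergeJ AJ K by simp
              next
                case False
                have ne: "VV j \<noteq> {}" using ks(1) j1 jk by simp
                then obtain x' where x': "x' \<in> VV j" by blast
                have "{x',y} \<in> E" if "y \<in> VV j" "y \<noteq> x'" for y
                  using ks_clique[OF j1 jk(2)] AJ x' that by blast
                then show ?thesis using NI1[OF indec[OF jk(2)] finVV[OF jk(2)] card2[OF jk(2) ne False] x'] by blast
              qed
            next
              case False
              then have ieq: "i = j" using ij by simp
              then have xj: "x \<in> VV j" using i by simp
              show ?thesis
              proof (cases "card (VV j) = 1")
                case False
                have ne: "VV j \<noteq> {}" using xj by blast
                have "{x,y} \<in> E" if "y \<in> VV j" "y \<noteq> x" for y
                  using un inL[OF jk(3)] that by blast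
                then show ?thesis using NI1[OF indec[OF jk(2)] finVV[OF jk(2)] card2[OF jk(2) ne False] xj] by blast
              next
                case c1: True
                show ?thesis
                proof (cases "j = 0")
                  case True then show ?thesis using mergeJ c1 by simp
                next
                  case j0: False
                  then have j1: "1 \<le> j" by simp
                  have "VV 0 \<noteq> {}" using v0 jk j1 by simp
                  then obtain y where y: "y \<in> VV 0" by blast
                  have "y \<noteq> x"
                  proof
                    assume "y = x"
                    then have "x \<in> VV 0" using y by simp
                    then have "0 = j" using uc[OF _ xj _ jk(2)] by simp
                    then show False using j0 by simp
                  qed
                  then have "{x,y} \<in> E" using un inL[OF _ y] by simp
                  then have "x \<in> AA j" using diff[OF jk(2) _ xj y] j1 by simp
                  then have "AA j = VV j" using single[OF c1 xj] AAsub[OF j1 jk(2)] by auto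
                  then show ?thesis using mergeJ c1 K by simp
                qed
              qed
            qed
          qed
        qed
      qed
      show ?thesis using L_P1[OF pr] eq by simp
    next
      case S: False
      have allS: "AA i = {}" if th: "i0 \<le> i" "i \<le> i1" for i
      proof -
        have ik: "i \<le> k" and i1': "1 \<le> i" using th g by simp_all
        obtain x where x: "VV i = {x}" using sing[OF th] card_1_singletonE by blast
        have "AA i \<noteq> VV i" using typq[OF th] S by simp
        moreover have "AA i \<subseteq> VV i" using AAsub[OF i1' ik] .
        ultimately show ?thesis using x by (auto simp: subset_singleton_iff)
      qed
      have eq: "VV' m = {x \<in> Lo m. \<forall>y\<in>Lo m. {x,y} \<notin> E}"
      proof (rule set_eqI)
        fix x
        show "x \<in> VV' m \<longleftrightarrow> x \<in> {x \<in> Lo m. \<forall>y\<in>Lo m. {x,y} \<notin> E}"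
        proof
          assume "x \<in> VV' m"
          then obtain i where i: "i0 \<le> i" "i \<le> i1" "x \<in> VV i" using VVm by blast
          have ik: "i \<le> k" using i g by simp
          have xL: "x \<in> Lo m" using inL i by blast
          have "{x,y} \<notin> E" if y: "y \<in> Lo m" for y
          proof -
            obtain i' where i': "i' \<le> i1" "y \<in> VV i'" using Lm y by blast
            have ik': "i' \<le> k" using i' g by simp
            consider "i' = i" | "i' < i" | "i < i'" by linarith
            then show ?thesis
            proof cases
              case 1
              then have "y = x" using single[OF sing[OF i(1,2)] i(3)] i' by blast
              then show ?thesis using irr by simp
            next
              case 2
              then show ?thesis using diff[OF ik 2 i(3) i'(2)] allS[OF i(1,2)] by simp
            next
              case 3
              have "AA i' = {}" using allS[of i'] i i' 3 by simp
              then have "{y,x} \<notin> E" using diff[OF ik' 3 i'(2) i(3)] by simp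
              then show ?thesis by (simp add: insert_commute)
            qed
          qed
          then show "x \<in> {x \<in> Lo m. \<forall>y\<in>Lo m. {x,y} \<notin> E}" using xL by blast
        next
          assume "x \<in> {x \<in> Lo m. \<forall>y\<in>Lo m. {x,y} \<notin> E}"
          then have xL: "x \<in> Lo m" and un: "\<And>y. y \<in> Lo m \<Longrightarrow> {x,y} \<notin> E" by blast+
          obtain i where i: "i \<le> i1" "x \<in> VV i" using Lm xL by blast
          have ik: "i \<le> k" using i g by simp
          show "x \<in> VV' m"
          proof (cases "i0 \<le> i")
            case True then show ?thesis using VVm i by blast
          next
            case False
            then have ij: "i \<le> j" using j_def by simp
            show ?thesis
            proof (cases "i < j")
              case True
              have j1: "1 \<le> j" using True by simp
              have "AA j \<subseteq> {}"
              proof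
                fix v assume v: "v \<in> AA j"
                then have vj: "v \<in> VV j" using AAsub[OF j1 jk(2)] by blast
                have "{x,v} \<notin> E" using un inL[OF jk(3) vj] by blast
                then have "{v,x} \<notin> E" by (simp add: insert_commute)
                then show "v \<in> {}" using diff[OF jk(2) True vj i(2)] v by simp
              qed
              then have AJ: "AA j = {}" by blast
              have ne: "VV j \<noteq> {}" using ks(1) j1 jk by simp
              show ?thesis
              proof (cases "card (VV j) = 1")
                case True
                then show ?thesis using mergeJ AJ S ne by simp
              next
                case False
                then obtain x' where x': "x' \<in> VV j" using ne by blast
                have "{x',y} \<notin> E" if "y \<in> VV j" for y
                  using ks_indep[OF j1 jk(2)] AJ x' that by blast
                then show ?thesis using NI2[OF indec[OF jk(2)] finVV[OF jk(2)] card2[OF jk(2) ne False] x'] by blast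
              qed
            next
              case False
              then have ieq: "i = j" using ij by simp
              then have xj: "x \<in> VV j" using i by simp
              show ?thesis
              proof (cases "card (VV j) = 1")
                case False
                have ne: "VV j \<noteq> {}" using xj by blast
                have "{x,y} \<notin> E" if "y \<in> VV j" for y
                  using un inL[OF jk(3)] that by blast
                then show ?thesis using NI2[OF indec[OF jk(2)] finVV[OF jk(2)] card2[OF jk(2) ne False] xj] by blast
              next
                case c1: True
                show ?thesis
                proof (cases "j = 0")
                  case True then show ?thesis using mergeJ c1 by simp
                next
                  case j0: False
                  then have j1: "1 \<le> j" by simp
                  have "VV 0 \<noteq> {}" using v0 jk j1 by simp
                  then obtain y where y: "y \<in> VV 0" by blast
                  have "{x,y} \<notin> E" using un inL[OF _ y] by simp
                  then have "x \<notin> AA j" using diff[OF jk(2) _ xj y] j1 by simp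
                  then have "AA j \<noteq> VV j" using xj by blast
                  then show ?thesis using mergeJ c1 S by simp
                qed
              qed
            qed
          qed
        qed
      qed
      show ?thesis using L_P2[OF pr] eq by simp
    qed
  qed
qed

lemma Lo_l: "Lo l = V"
proof
  show "Lo l \<subseteq> V" by (rule Lo_sub)
  show "V \<subseteq> Lo l"
  proof
    fix x assume "x \<in> V"
    then obtain i where "i \<le> k" "x \<in> VV i" using memV by blast
    then show "x \<in> Lo l" unfolding Lo_def using g_le by blast
  qed
qed

lemma Lo_0: "Lo 0 = VV' 0"
  unfolding Lo_def using VV'mem[of 0] by auto

lemma VV'_Lo: "m \<le> l \<Longrightarrow> VV' m \<subseteq> Lo m"
  unfolding Lo_def using VV'mem by fastforce

lemma Lo_diff:
  assumes m: "1 \<le> m" "m \<le> l"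
  shows "Lo (m - 1) = Lo m - VV' m"
proof
  show "Lo (m - 1) \<subseteq> Lo m - VV' m"
  proof
    fix x assume "x \<in> Lo (m - 1)"
    then obtain i where i: "i \<le> k" "g i \<le> m - 1" "x \<in> VV i" unfolding Lo_def by blast
    have "x \<in> Lo m" unfolding Lo_def using i by (intro CollectI exI[of _ i]) simp
    moreover have "x \<notin> VV' m"
    proof
      assume "x \<in> VV' m"
      then obtain i' where i': "i' \<le> k" "g i' = m" "x \<in> VV i'" using VV'mem m by blast
      then have "i' = i" using uc i by blast
      then show False using i i' m by simp
    qed
    ultimately show "x \<in> Lo m - VV' m" by blast
  qed
  show "Lo m - VV' m \<subseteq> Lo (m - 1)"
  proof
    fix x assume x: "x \<in> Lo m - VV' m"
    then obtain i where i: "i \<le> k" "g i \<le> m" "x \<in> VV i" unfolding Lo_def by blast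
    have "g i \<noteq> m" using x i VV'mem m by blast
    then show "x \<in> Lo (m - 1)" unfolding Lo_def using i by (intro CollectI exI[of _ i]) simp
  qed
qed

lemma C6:
  assumes f: "automorphism V E f" and j: "j \<le> l"
  shows "f ` VV' j = VV' j"
proof -
  have step: "\<forall>n. n \<le> l \<longrightarrow> f ` Lo (l - n) = Lo (l - n)"
  proof (intro allI)
    fix n show "n \<le> l \<longrightarrow> f ` Lo (l - n) = Lo (l - n)"
    proof (induction n)
      case 0
      have "f ` V = V" using f unfolding automorphism_def bij_betw_def by blast
      then show ?case using Lo_l by simp
    next
      case (Suc n)
      show ?case
      proof
        assume h: "Suc n \<le> l"
        define m where "m = l - n"
        have m: "1 \<le> m" "m \<le> l" using h m_def by simp_all
        have IH: "f ` Lo m = Lo m" using Suc.IH h m_def by simp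
        have pr: "pres E (Lo m) f" using pres_of_aut[OF f Lo_sub IH] .
        have T: "f ` VV' m = VV' m" using TOP[OF m pr] .
        have inj: "inj_on f (Lo m)" using pr unfolding pres_def bij_betw_def by blast
        have "f ` (Lo m - VV' m) = f ` Lo m - f ` VV' m"
          using inj_on_image_set_diff[OF inj, of "Lo m" "VV' m"] VV'_Lo[OF m(2)] by blast
        then have "f ` Lo (m - 1) = Lo (m - 1)" using Lo_diff[OF m] IH T by simp
        moreover have "l - Suc n = m - 1" using m_def by simp
        ultimately show "f ` Lo (l - Suc n) = Lo (l - Suc n)" by simp
      qed
    qed
  qed
  show ?thesis
  proof (cases "j = 0")
    case True
    have "f ` Lo (l - l) = Lo (l - l)" using step[rule_format, of l] by simp
    then show ?thesis using True Lo_0 by simp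
  next
    case False
    have "f ` Lo (l - (l - j)) = Lo (l - (l - j))" using step by simp
    then have L: "f ` Lo j = Lo j" using j by simp
    show ?thesis using TOP[of j f] False j pres_of_aut[OF f Lo_sub L] by simp
  qed
qed

end

theorem mainTheorem7:
  fixes V :: "'a set" and E :: "'a set set" and l :: nat
    and VV' :: "nat \<Rightarrow> 'a set" and EE' :: "nat \<Rightarrow> 'a set set"
    and AA' BB' :: "nat \<Rightarrow> 'a set"
  assumes "graph V E"
    and "compact_canon_decomp V E l VV' EE' AA' BB'"
  shows "(\<forall>S. S \<subseteq> V \<longrightarrow>
            (fixing_set V E S \<longleftrightarrow> (\<forall>i\<le>l. fixing_set (VV' i) (EE' i) (S \<inter> VV' i))))
         \<and> Fix V E = (\<Sum>i\<le>l. Fix (VV' i) (EE' i))"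
proof -
  obtain k VV EE AA BB g where cdx: "canon_decomp V E k VV EE AA BB" and h:
        "g 0 = 0"
        "\<forall>i<k. g (Suc i) = (if merge_next k VV AA i then g i else Suc (g i))"
        "g k = l"
        "\<forall>j\<le>l. VV' j = (\<Union>i\<in>{i. i \<le> k \<and> g i = j}. VV i)"
        "\<forall>i\<le>k. EE' (g i) =
            (if card (VV i) = 1
             then (if typeK k VV AA i then complete_edges (VV' (g i)) else {})
             else EE i)"
        "\<forall>i. 1 \<le> i \<and> i \<le> k \<longrightarrow> (AA' (g i), BB' (g i)) =
            (if card (VV i) = 1
             then (if AA i = VV i then (VV' (g i), {}) else ({}, VV' (g i)))
             else (AA i, BB i))"
    using assms(2) unfolding compact_canon_decomp_def
    apply (elim exE conjE)
    apply (rule that)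
           apply assumption+
    done
  interpret c: ccd V E k VV EE AA BB l VV' EE' AA' BB' g
    by (intro ccd.intro cd.intro ccd_axioms.intro) (fact assms(1) cdx h)+
  interpret a: absdec V E l VV' EE' AA'
    by (intro absdec.intro) (fact c.finV c.C1 c.C2 c.C3 c.C4 c.C5 c.C6)+
  show ?thesis using a.part1 a.part2 by blast
qed

end
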